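(* Let $n\in\{2,3\}$ and let $A=(a_{i,j})\in M_n(\mathcal F)$ be a supertropically nonsingular matrix whose characteristic polynomial $f_A(x)=\det(xI+A)$ has all coefficients tangible and which has $n$ distinct eigenvalues $\lambda_1,\dots,\lambda_n$. For each $k$, let $\lambda_k$ be the corner root of $f_A$ between two subsequent essential monomials $\alpha_{i_{k-1}}x^{n-i_{k-1}}$ and $\alpha_{i_k}x^{n-i_k}$, choose $t_k\in I_{\lambda_k}=\mathrm{Ind}_{i_k}\setminus \mathrm{Ind}_{i_{k-1}}$, and let $v_k$ be the tangible value of the $t_k$-th column of $\mathrm{adj}(A+\lambda_k I)$ (an eigenvector of $A$ for $\lambda_k$). Then $v_1,\dots,v_n$ are supertropically independent.
   Context: $\mathcal F=\mathcal T\cup\mathcal G\cup\{0_{\mathcal F}\}$ is the standard supertropical semifield: $\mathcal T$ is an ordered abelian group (e.g. $(\mathbb R,+)$, written multiplicatively), $\mathcal G=\{a^\nu: a\in\mathcal T\}$ is a copy of it (ghost elements), $\nu:\mathcal F\to\mathcal G\cup\{0_{\mathcal F}\}$ is the identity on $\mathcal G$ and $a\mapsto a^\nu$ on $\mathcal T$, $0_{\mathcal F}=-\infty$. Addition: $a+b$ is the one of $a,b$ of larger $\nu$-value if the $\nu$-values differ, and $a+b=a^\nu$ if $a^\nu=b^\nu$; multiplication is the group operation on $\nu$-values, the product being tangible iff both factors are tangible. For $a\in\mathcal F$, its tangible value $\hat a\in\mathcal T\cup\{0_{\mathcal F}\}$ is the tangible element with $\hat a^\nu=a^\nu$ (applied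 entrywise to vectors). $\det(A)=\sum_{\sigma\in S_n}\prod_i a_{i,\sigma(i)}$; $A$ is supertropically nonsingular if $\det(A)\in\mathcal T$. $\mathrm{adj}(A)_{i,j}=\det$ of the minor of $A$ obtained by deleting row $j$ and column $i$. The characteristic polynomial is $f_A(x)=\det(xI+A)=\sum_{k=0}^n\alpha_kx^{n-k}$, where $\alpha_k$ is the sum of the determinants of all $k\times k$ principal submatrices; when $\alpha_k\in\mathcal T$, $\mathrm{Ind}_k\subseteq[n]$ denotes the index set (of size $k$) on which the unique dominant permutation giving $\alpha_k$ is attained ($\mathrm{Ind}_0=\emptyset$). A monomial is essential if it strictly dominates the polynomial at some point; corner roots are points where two subsequent essential tangible monomials are equal. Eigenvalues of $A$ are the tangible values of roots of $f_A$ (elements $r$ with $f_A(r)\in\mathcal G\cup\{0_{\mathcal F}\}$). Vectors $v_1,\dots,v_k\in\mathcal F^n$ are supertropically dependent if there are $a_1,\dots,a_k\in\mathcal T$ with every coordinate of $\sum a_iv_i$ in $\mathcal G\cup\{0_{\mathcal F}\}$, and independent otherwise. *)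

theory Defs
  imports "HOL-Combinatorics.Permutations"
begin

text \<open>The ordered abelian group T is written additively here (type class
 linordered_ab_group_add, e.g. real); Tan a is the tangible element a, Gh a is
 its ghost a^nu, SZero is 0_F = -infinity.\<close>

datatype 'a st = SZero | Tan 'a | Gh 'a

fun sval :: "'a st \<Rightarrow> 'a" where
  "sval (Tan a) = a"
| "sval (Gh a) = a"
| "sval SZero = undefined"

definition tangible :: "'a st \<Rightarrow> bool" where
  "tangible x \<longleftrightarrow> (\<exists>a. x = Tan a)"

definition ghost0 :: "'a st \<Rightarrow> bool" where
  "ghost0 x \<longleftrightarrow> \<not> tangible x"

definition nu_less :: "'a::linorder st \<Rightarrow> 'a st \<Rightarrow> bool" where
  "nu_less x y \<longleftrightarrow> y \<noteq> SZero \<and> (x = SZero \<or> sval x < sval y)"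

definition nu_eq :: "'a st \<Rightarrow> 'a st \<Rightarrow> bool" where
  "nu_eq x y \<longleftrightarrow> (x = SZero \<and> y = SZero) \<or> (x \<noteq> SZero \<and> y \<noteq> SZero \<and> sval x = sval y)"

fun hat :: "'a st \<Rightarrow> 'a st" where
  "hat SZero = SZero"
| "hat (Tan a) = Tan a"
| "hat (Gh a) = Tan a"

instantiation st :: (linordered_ab_group_add) comm_monoid_add
begin
definition zero_st_def: "0 = SZero"
definition plus_st_def: "x + y =
  (if x = SZero then y else if y = SZero then x
   else if sval x < sval y then y else if sval y < sval x then x else Gh (sval x))"
instance
proof
  fix a b c :: "'a st"
  show "a + b + c = a + (b + c)"
    by (cases a; cases b; cases c) (auto simp: plus_st_def)
  show "a + b = b + a"
    by (cases a; cases b) (auto simp: plus_st_def)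
  show "0 + a = a" by (simp add: plus_st_def zero_st_def)
qed
end

instantiation st :: (linordered_ab_group_add) comm_monoid_mult
begin
definition one_st_def: "1 = Tan 0"
fun times_st :: "'a st \<Rightarrow> 'a st \<Rightarrow> 'a st" where
  "times_st SZero y = SZero"
| "times_st x SZero = SZero"
| "times_st (Tan a) (Tan b) = Tan (a + b)"
| "times_st x y = Gh (sval x + sval y)"
instance
proof
  fix a b c :: "'a st"
  show "a * b * c = a * (b * c)"
    by (cases a; cases b; cases c) (auto simp: add.assoc)
  show "a * b = b * a"
    by (cases a; cases b) (auto simp: add.commute)
  show "1 * a = a" by (cases a) (auto simp: one_st_def)
qed
end

section \<open>Matrices (n x n, indices 0..<n, as functions nat \<Rightarrow> nat \<Rightarrow> 'a st)\<close>

type_synonym 'a smat = "nat \<Rightarrow> nat \<Rightarrow> 'a st"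

definition pdet :: "'a::linordered_ab_group_add smat \<Rightarrow> nat set \<Rightarrow> 'a st" where
  "pdet A S = (\<Sum>\<sigma>\<in>{\<sigma>. \<sigma> permutes S}. \<Prod>i\<in>S. A i (\<sigma> i))"

definition sdet :: "'a::linordered_ab_group_add smat \<Rightarrow> nat \<Rightarrow> 'a st" where
  "sdet A n = pdet A {..<n}"

definition skip :: "nat \<Rightarrow> nat \<Rightarrow> nat" where
  "skip k i = (if i < k then i else Suc i)"

definition minor :: "'a smat \<Rightarrow> nat \<Rightarrow> nat \<Rightarrow> 'a smat" where
  "minor A r c = (\<lambda>i j. A (skip r i) (skip c j))"

definition sadj :: "'a::linordered_ab_group_add smat \<Rightarrow> nat \<Rightarrow> 'a smat" where
  "sadj A n = (\<lambda>i j. sdet (minor A j i) (n - 1))"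

definition add_diag :: "'a::linordered_ab_group_add smat \<Rightarrow> 'a st \<Rightarrow> 'a smat" where
  "add_diag A l = (\<lambda>i j. if i = j then A i j + l else A i j)"

definition char_coeff :: "'a::linordered_ab_group_add smat \<Rightarrow> nat \<Rightarrow> nat \<Rightarrow> 'a st" where
  "char_coeff A n k = (\<Sum>S\<in>{S. S \<subseteq> {..<n} \<and> card S = k}. pdet A S)"

definition char_poly_eval :: "'a::linordered_ab_group_add smat \<Rightarrow> nat \<Rightarrow> 'a st \<Rightarrow> 'a st" where
  "char_poly_eval A n x = (\<Sum>k\<le>n. char_coeff A n k * x ^ (n - k))"

definition Ind :: "'a::linordered_ab_group_add smat \<Rightarrow> nat \<Rightarrow> nat \<Rightarrow> nat set" where
  "Ind A n k = (THE S. S \<subseteq> {..<n} \<and> card S = k \<and>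
      (\<exists>\<sigma>. \<sigma> permutes S \<and> (\<Prod>i\<in>S. A i (\<sigma> i)) = char_coeff A n k))"

definition essential :: "'a::linordered_ab_group_add smat \<Rightarrow> nat \<Rightarrow> nat \<Rightarrow> bool" where
  "essential A n k \<longleftrightarrow> k \<le> n \<and> (\<exists>a. tangible a \<and>
     (\<forall>j\<le>n. j \<noteq> k \<longrightarrow> nu_less (char_coeff A n j * a ^ (n - j)) (char_coeff A n k * a ^ (n - k))))"

definition eigenvalues :: "'a::linordered_ab_group_add smat \<Rightarrow> nat \<Rightarrow> 'a st set" where
  "eigenvalues A n = {r. tangible r \<and> ghost0 (char_poly_eval A n r)}"

definition st_dependent :: "nat \<Rightarrow> (nat \<Rightarrow> nat \<Rightarrow> 'a::linordered_ab_group_add st) \<Rightarrow> nat \<Rightarrow> bool" where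
  "st_dependent n v m \<longleftrightarrow> (\<exists>c. (\<forall>i\<in>{1..m}. tangible (c i)) \<and>
      (\<forall>j<n. ghost0 (\<Sum>i\<in>{1..m}. c i * v i j)))"

definition st_independent :: "nat \<Rightarrow> (nat \<Rightarrow> nat \<Rightarrow> 'a::linordered_ab_group_add st) \<Rightarrow> nat \<Rightarrow> bool" where
  "st_independent n v m \<longleftrightarrow> \<not> st_dependent n v m"

end

theory Submission
  imports Defs
begin


lemma st_zero: "(0::'a::linordered_ab_group_add st) = SZero" by (simp add: zero_st_def)

lemma st_mult_zero_iff: "((x::'a::linordered_ab_group_add st) * y = SZero) \<longleftrightarrow> x = SZero \<or> y = SZero"
  by (cases x; cases y) auto

lemma st_mult_SZero [simp]: "(x::'a::linordered_ab_group_add st) * SZero = SZero" "SZero * x = SZero"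
  by (cases x; simp)+

lemma st_sval_mult: "(x::'a::linordered_ab_group_add st) \<noteq> SZero \<Longrightarrow> y \<noteq> SZero \<Longrightarrow> sval (x * y) = sval x + sval y"
  by (cases x; cases y) auto

lemma st_add_zero_iff: "((x::'a::linordered_ab_group_add st) + y = SZero) \<longleftrightarrow> x = SZero \<and> y = SZero"
  by (cases x; cases y) (auto simp: plus_st_def)

lemma st_sval_add_cases: "(x::'a::linordered_ab_group_add st) + y \<noteq> SZero \<Longrightarrow>
   (x \<noteq> SZero \<and> sval (x + y) = sval x \<and> (y = SZero \<or> sval y \<le> sval x)) \<or>
   (y \<noteq> SZero \<and> sval (x + y) = sval y \<and> (x = SZero \<or> sval x \<le> sval y))"
  by (cases x; cases y) (auto simp: plus_st_def)

lemma st_hat_zero_iff: "hat x = SZero \<longleftrightarrow> x = SZero" by (cases x) auto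
lemma st_sval_hat: "sval (hat x) = sval x" by (cases x) auto
lemma st_tangible_hat: "x \<noteq> SZero \<Longrightarrow> tangible (hat x)" by (cases x) (auto simp: tangible_def)

lemma st_sum_dom: "(x::'a::linordered_ab_group_add st) \<noteq> SZero \<Longrightarrow> (y = SZero \<or> sval y < sval x) \<Longrightarrow> x + y = x"
  by (cases x; cases y) (auto simp: plus_st_def)
lemma st_sum_dom2: "(x::'a::linordered_ab_group_add st) \<noteq> SZero \<Longrightarrow> (y = SZero \<or> sval y < sval x) \<Longrightarrow> y + x = x"
  by (cases x; cases y) (auto simp: plus_st_def)

lemma st_hat_sum_val: "(x::'a::linordered_ab_group_add st) \<noteq> SZero \<Longrightarrow> sval x = d \<Longrightarrow> (y = SZero \<or> sval y \<le> d) \<Longrightarrow> hat (x + y) = Tan d"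
  by (cases x; cases y) (auto simp: plus_st_def)



lemma diag_nz: "(d::'a::linordered_ab_group_add st) + Tan l \<noteq> SZero"
  by (cases d) (auto simp: plus_st_def)
lemma diag_sval: "sval ((d::'a::linordered_ab_group_add st) + Tan l) = (if d \<noteq> SZero \<and> l < sval d then sval d else l)"
  by (cases d) (auto simp: plus_st_def)
lemma E1q:
  fixes pp pq pr qp qq qr rp rq rr :: "'a::linordered_ab_group_add st"
  shows "hat (qp * (rr + Tan a1) + qr * rp) \<noteq> SZero \<Longrightarrow> (qp \<noteq> SZero \<Longrightarrow> rr \<noteq> SZero \<Longrightarrow> sval (hat (qp * (rr + Tan a1) + qr * rp)) = sval qp + sval rr \<Longrightarrow> P) \<Longrightarrow> (qp \<noteq> SZero \<Longrightarrow> sval (hat (qp * (rr + Tan a1) + qr * rp)) = sval qp + a1 \<Longrightarrow> P) \<Longrightarrow> (qr \<noteq> SZero \<Longrightarrow> rp \<noteq> SZero \<Longrightarrow> sval (hat (qp * (rr + Tan a1) + qr * rp)) = sval qr + sval rp \<Longrightarrow> P) \<Longrightarrow> P"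
  using st_sval_add_cases[of "qp * (rr + Tan a1)" "qr * rp"]
  by (auto simp: st_hat_zero_iff st_sval_hat st_add_zero_iff st_mult_zero_iff st_sval_mult diag_sval diag_nz split: if_splits)

lemma E1r:
  fixes pp pq pr qp qq qr rp rq rr :: "'a::linordered_ab_group_add st"
  shows "hat (qp * rq + (qq + Tan a1) * rp) \<noteq> SZero \<Longrightarrow> (qp \<noteq> SZero \<Longrightarrow> rq \<noteq> SZero \<Longrightarrow> sval (hat (qp * rq + (qq + Tan a1) * rp)) = sval qp + sval rq \<Longrightarrow> P) \<Longrightarrow> (qq \<noteq> SZero \<Longrightarrow> rp \<noteq> SZero \<Longrightarrow> sval (hat (qp * rq + (qq + Tan a1) * rp)) = sval qq + sval rp \<Longrightarrow> P) \<Longrightarrow> (rp \<noteq> SZero \<Longrightarrow> sval (hat (qp * rq + (qq + Tan a1) * rp)) = a1 + sval rp \<Longrightarrow> P) \<Longrightarrow> P"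
  using st_sval_add_cases[of "qp * rq" "(qq + Tan a1) * rp"]
  by (auto simp: st_hat_zero_iff st_sval_hat st_add_zero_iff st_mult_zero_iff st_sval_mult diag_sval diag_nz split: if_splits)

lemma E2p:
  fixes pp pq pr qp qq qr rp rq rr :: "'a::linordered_ab_group_add st"
  shows "hat (pq * (rr + Tan (a2 - a1)) + pr * rq) \<noteq> SZero \<Longrightarrow> (pq \<noteq> SZero \<Longrightarrow> rr \<noteq> SZero \<Longrightarrow> sval (hat (pq * (rr + Tan (a2 - a1)) + pr * rq)) = sval pq + sval rr \<Longrightarrow> P) \<Longrightarrow> (pq \<noteq> SZero \<Longrightarrow> sval (hat (pq * (rr + Tan (a2 - a1)) + pr * rq)) = sval pq + (a2 - a1) \<Longrightarrow> P) \<Longrightarrow> (pr \<noteq> SZero \<Longrightarrow> rq \<noteq> SZero \<Longrightarrow> sval (hat (pq * (rr + Tan (a2 - a1)) + pr * rq)) = sval pr + sval rq \<Longrightarrow> P) \<Longrightarrow> P"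
  using st_sval_add_cases[of "pq * (rr + Tan (a2 - a1))" "pr * rq"]
  by (auto simp: st_hat_zero_iff st_sval_hat st_add_zero_iff st_mult_zero_iff st_sval_mult diag_sval diag_nz split: if_splits)

lemma E2r:
  fixes pp pq pr qp qq qr rp rq rr :: "'a::linordered_ab_group_add st"
  shows "hat ((pp + Tan (a2 - a1)) * rq + pq * rp) \<noteq> SZero \<Longrightarrow> (pp \<noteq> SZero \<Longrightarrow> rq \<noteq> SZero \<Longrightarrow> sval (hat ((pp + Tan (a2 - a1)) * rq + pq * rp)) = sval pp + sval rq \<Longrightarrow> P) \<Longrightarrow> (rq \<noteq> SZero \<Longrightarrow> sval (hat ((pp + Tan (a2 - a1)) * rq + pq * rp)) = (a2 - a1) + sval rq \<Longrightarrow> P) \<Longrightarrow> (pq \<noteq> SZero \<Longrightarrow> rp \<noteq> SZero \<Longrightarrow> sval (hat ((pp + Tan (a2 - a1)) * rq + pq * rp)) = sval pq + sval rp \<Longrightarrow> P) \<Longrightarrow> P"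
  using st_sval_add_cases[of "(pp + Tan (a2 - a1)) * rq" "pq * rp"]
  by (auto simp: st_hat_zero_iff st_sval_hat st_add_zero_iff st_mult_zero_iff st_sval_mult diag_sval diag_nz split: if_splits)

lemma E3p:
  fixes pp pq pr qp qq qr rp rq rr :: "'a::linordered_ab_group_add st"
  shows "hat (pq * qr + pr * (qq + Tan (a3 - a2))) \<noteq> SZero \<Longrightarrow> (pq \<noteq> SZero \<Longrightarrow> qr \<noteq> SZero \<Longrightarrow> sval (hat (pq * qr + pr * (qq + Tan (a3 - a2)))) = sval pq + sval qr \<Longrightarrow> P) \<Longrightarrow> (pr \<noteq> SZero \<Longrightarrow> qq \<noteq> SZero \<Longrightarrow> sval (hat (pq * qr + pr * (qq + Tan (a3 - a2)))) = sval pr + sval qq \<Longrightarrow> P) \<Longrightarrow> (pr \<noteq> SZero \<Longrightarrow> sval (hat (pq * qr + pr * (qq + Tan (a3 - a2)))) = sval pr + (a3 - a2) \<Longrightarrow> P) \<Longrightarrow> P"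
  using st_sval_add_cases[of "pq * qr" "pr * (qq + Tan (a3 - a2))"]
  by (auto simp: st_hat_zero_iff st_sval_hat st_add_zero_iff st_mult_zero_iff st_sval_mult diag_sval diag_nz split: if_splits)

lemma E3q:
  fixes pp pq pr qp qq qr rp rq rr :: "'a::linordered_ab_group_add st"
  shows "hat ((pp + Tan (a3 - a2)) * qr + pr * qp) \<noteq> SZero \<Longrightarrow> (pp \<noteq> SZero \<Longrightarrow> qr \<noteq> SZero \<Longrightarrow> sval (hat ((pp + Tan (a3 - a2)) * qr + pr * qp)) = sval pp + sval qr \<Longrightarrow> P) \<Longrightarrow> (qr \<noteq> SZero \<Longrightarrow> sval (hat ((pp + Tan (a3 - a2)) * qr + pr * qp)) = (a3 - a2) + sval qr \<Longrightarrow> P) \<Longrightarrow> (pr \<noteq> SZero \<Longrightarrow> qp \<noteq> SZero \<Longrightarrow> sval (hat ((pp + Tan (a3 - a2)) * qr + pr * qp)) = sval pr + sval qp \<Longrightarrow> P) \<Longrightarrow> P"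
  using st_sval_add_cases[of "(pp + Tan (a3 - a2)) * qr" "pr * qp"]
  by (auto simp: st_hat_zero_iff st_sval_hat st_add_zero_iff st_mult_zero_iff st_sval_mult diag_sval diag_nz split: if_splits)



lemma lt_cert: "(a::'a::linordered_ab_group_add) < b \<Longrightarrow> b - a = d - c \<Longrightarrow> c < d"
  by (metis diff_gt_0_iff_gt)

locale core0 =
  fixes pp pq pr qp qq qr rp rq rr :: "'a::linordered_ab_group_add st" and a1 a2 a3 :: 'a
  assumes hpp_nz: "pp \<noteq> SZero" and hpp: "sval pp = a1"
  and hqq: "qq \<noteq> SZero \<Longrightarrow> sval qq < a1"
  and hrr: "rr \<noteq> SZero \<Longrightarrow> sval rr < a1"
  and hqq_nz: "qq \<noteq> SZero" and hqq_eq: "sval qq = a2 - a1"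
  and h_pqqp: "pq \<noteq> SZero \<Longrightarrow> qp \<noteq> SZero \<Longrightarrow> sval pq + sval qp < a2"
  and h_pprr: "rr \<noteq> SZero \<Longrightarrow> sval pp + sval rr < a2"
  and h_prrp: "pr \<noteq> SZero \<Longrightarrow> rp \<noteq> SZero \<Longrightarrow> sval pr + sval rp < a2"
  and h_qqrr: "qq \<noteq> SZero \<Longrightarrow> rr \<noteq> SZero \<Longrightarrow> sval qq + sval rr < a2"
  and h_qrrq: "qr \<noteq> SZero \<Longrightarrow> rq \<noteq> SZero \<Longrightarrow> sval qr + sval rq < a2"
  and h3_ppqqrr: "qq \<noteq> SZero \<Longrightarrow> rr \<noteq> SZero \<Longrightarrow> sval pp + sval qq + sval rr \<le> a3"
  and h3_ppqrrq: "qr \<noteq> SZero \<Longrightarrow> rq \<noteq> SZero \<Longrightarrow> sval pp + sval qr + sval rq \<le> a3"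
  and h3_pqqprr: "pq \<noteq> SZero \<Longrightarrow> qp \<noteq> SZero \<Longrightarrow> rr \<noteq> SZero \<Longrightarrow> sval pq + sval qp + sval rr \<le> a3"
  and h3_prrpqq: "pr \<noteq> SZero \<Longrightarrow> rp \<noteq> SZero \<Longrightarrow> qq \<noteq> SZero \<Longrightarrow> sval pr + sval rp + sval qq \<le> a3"
  and h3_pqqrrp: "pq \<noteq> SZero \<Longrightarrow> qr \<noteq> SZero \<Longrightarrow> rp \<noteq> SZero \<Longrightarrow> sval pq + sval qr + sval rp \<le> a3"
  and h3_prrqqp: "pr \<noteq> SZero \<Longrightarrow> rq \<noteq> SZero \<Longrightarrow> qp \<noteq> SZero \<Longrightarrow> sval pr + sval rq + sval qp \<le> a3"
  and conc1: "a2 < a1 + a1" and conc2: "a1 + a3 < a2 + a2"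
begin
lemmas eqs = hpp_nz hpp hqq_nz hqq_eq

lemma l21: "a2 - a1 < a1" using conc1 by (simp add: diff_less_eq)
lemma l32: "a3 - a2 < a1"
  by (rule lt_cert[OF add_strict_mono[OF conc1 conc2]]) (simp add: algebra_simps)
lemma l32b: "a3 - a2 < a2 - a1"
  by (rule lt_cert[OF conc2]) (simp add: algebra_simps)

lemma diag1: "hat ((qq + Tan a1) * (rr + Tan a1) + qr * rq) = Tan (a1 + a1)"
proof -
  have 1: "qq + Tan a1 = Tan a1" by (rule st_sum_dom2) (use hqq in auto)
  have 2: "rr + Tan a1 = Tan a1" by (rule st_sum_dom2) (use hrr in auto)
  have 3: "qr * rq = SZero \<or> sval (qr * rq) \<le> a1 + a1"
  proof (cases "qr * rq = SZero")
    case False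
    then have "qr \<noteq> SZero" "rq \<noteq> SZero" by (auto simp: st_mult_zero_iff)
    then have "sval qr + sval rq < a1 + a1" using h_qrrq conc1 by (meson less_trans)
    then show ?thesis using \<open>qr \<noteq> SZero\<close> \<open>rq \<noteq> SZero\<close> by (simp add: st_sval_mult less_imp_le)
  qed simp
  show ?thesis unfolding 1 2 by (rule st_hat_sum_val) (use 3 in auto)
qed

lemma diag2: "hat ((pp + Tan (a2 - a1)) * (rr + Tan (a2 - a1)) + pr * rp) = Tan a2"
proof -
  have 1: "pp + Tan (a2 - a1) = pp" by (rule st_sum_dom) (use hpp_nz hpp l21 in auto)
  have 2: "rr + Tan (a2 - a1) = Tan (a2 - a1)" by (rule st_sum_dom2) (use h_pprr hpp in \<open>auto simp: less_diff_eq add.commute\<close>)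
  have 3: "pr * rp = SZero \<or> sval (pr * rp) \<le> a2"
  proof (cases "pr * rp = SZero")
    case False
    then have "pr \<noteq> SZero" "rp \<noteq> SZero" by (auto simp: st_mult_zero_iff)
    then show ?thesis using h_prrp[OF \<open>pr \<noteq> SZero\<close> \<open>rp \<noteq> SZero\<close>] by (simp add: st_sval_mult less_imp_le)
  qed simp
  show ?thesis unfolding 1 2 by (rule st_hat_sum_val) (use 3 hpp_nz hpp in \<open>auto simp: st_mult_zero_iff st_sval_mult\<close>)
qed

lemma diag3: "hat ((pp + Tan (a3 - a2)) * (qq + Tan (a3 - a2)) + pq * qp) = Tan a2"
proof -
  have 1: "pp + Tan (a3 - a2) = pp" by (rule st_sum_dom) (use hpp_nz hpp l32 in auto)
  have 2: "qq + Tan (a3 - a2) = qq" by (rule st_sum_dom) (use hqq_nz hqq_eq l32b in auto)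
  have 3: "pq * qp = SZero \<or> sval (pq * qp) \<le> a2"
  proof (cases "pq * qp = SZero")
    case False
    then have "pq \<noteq> SZero" "qp \<noteq> SZero" by (auto simp: st_mult_zero_iff)
    then show ?thesis using h_pqqp[OF \<open>pq \<noteq> SZero\<close> \<open>qp \<noteq> SZero\<close>] by (simp add: st_sval_mult less_imp_le)
  qed simp
  show ?thesis unfolding 1 2 by (rule st_hat_sum_val) (use 3 hpp_nz hpp hqq_nz hqq_eq in \<open>auto simp: st_mult_zero_iff st_sval_mult\<close>)
qed

lemma cyc0:
  assumes n0: "hat (pq * (rr + Tan (a2 - a1)) + pr * rq) \<noteq> SZero" and n1: "hat (qp * (rr + Tan a1) + qr * rp) \<noteq> SZero"
  shows "sval (hat (pq * (rr + Tan (a2 - a1)) + pr * rq)) + sval (hat (qp * (rr + Tan a1) + qr * rp)) < (a1 + a1) + a2"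
  apply (rule E2p[OF n0]; rule E1q[OF n1])
  subgoal premises P by (rule lt_cert[OF add_strict_mono[OF hrr add_strict_mono[OF hrr h_pqqp]]]) (simp_all only: P, (simp_all add: eqs algebra_simps)?)
  subgoal premises P by (rule lt_cert[OF add_strict_mono[OF hrr h_pqqp]]) (simp_all only: P, (simp_all add: eqs algebra_simps)?)
  subgoal premises P by (rule lt_cert[OF add_strict_mono[OF hrr add_le_less_mono[OF h3_pqqrrp add_strict_mono[OF conc1 conc2]]]]) (simp_all only: P, (simp_all add: eqs algebra_simps)?)
  subgoal premises P by (rule lt_cert[OF add_strict_mono[OF hrr add_strict_mono[OF h_pqqp conc1]]]) (simp_all only: P, (simp_all add: eqs algebra_simps)?)
  subgoal premises P by (rule lt_cert[OF add_strict_mono[OF h_pqqp conc1]]) (simp_all only: P, (simp_all add: eqs algebra_simps)?)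
  subgoal premises P by (rule lt_cert[OF add_le_less_mono[OF h3_pqqrrp add_strict_mono[OF conc1 add_strict_mono[OF conc1 conc2]]]]) (simp_all only: P, (simp_all add: eqs algebra_simps)?)
  subgoal premises P by (rule lt_cert[OF add_strict_mono[OF hrr add_le_less_mono[OF h3_prrqqp add_strict_mono[OF conc1 conc2]]]]) (simp_all only: P, (simp_all add: eqs algebra_simps)?)
  subgoal premises P by (rule lt_cert[OF add_le_less_mono[OF h3_prrqqp add_strict_mono[OF conc1 conc2]]]) (simp_all only: P, (simp_all add: eqs algebra_simps)?)
  subgoal premises P by (rule lt_cert[OF add_strict_mono[OF h_prrp add_strict_mono[OF h_qrrq conc1]]]) (simp_all only: P, (simp_all add: eqs algebra_simps)?)
  done

lemma cyc1:
  assumes n0: "hat (pq * qr + pr * (qq + Tan (a3 - a2))) \<noteq> SZero" and n1: "hat (qp * rq + (qq + Tan a1) * rp) \<noteq> SZero"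
  shows "sval (hat (pq * qr + pr * (qq + Tan (a3 - a2)))) + sval (hat (qp * rq + (qq + Tan a1) * rp)) < (a1 + a1) + a2"
  apply (rule E3p[OF n0]; rule E1r[OF n1])
  subgoal premises P by (rule lt_cert[OF add_strict_mono[OF h_pqqp add_strict_mono[OF h_qrrq conc1]]]) (simp_all only: P, (simp_all add: eqs algebra_simps)?)
  subgoal premises P by (rule lt_cert[OF add_strict_mono[OF hqq add_le_less_mono[OF h3_pqqrrp add_strict_mono[OF conc1 conc2]]]]) (simp_all only: P, (simp_all add: eqs algebra_simps)?)
  subgoal premises P by (rule lt_cert[OF add_le_less_mono[OF h3_pqqrrp add_strict_mono[OF conc1 conc2]]]) (simp_all only: P, (simp_all add: eqs algebra_simps)?)
  subgoal premises P by (rule lt_cert[OF add_strict_mono[OF hqq add_le_less_mono[OF h3_prrqqp add_strict_mono[OF conc1 conc2]]]]) (simp_all only: P, (simp_all add: eqs algebra_simps)?)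
  subgoal premises P by (rule lt_cert[OF add_strict_mono[OF hqq add_strict_mono[OF hqq h_prrp]]]) (simp_all only: P, (simp_all add: eqs algebra_simps)?)
  subgoal premises P by (rule lt_cert[OF add_strict_mono[OF hqq h_prrp]]) (simp_all only: P, (simp_all add: eqs algebra_simps)?)
  subgoal premises P by (rule lt_cert[OF add_le_less_mono[OF h3_prrqqp add_strict_mono[OF conc1 add_strict_mono[OF conc1 add_strict_mono[OF conc2 conc2]]]]]) (simp_all only: P, (simp_all add: eqs algebra_simps)?)
  subgoal premises P by (rule lt_cert[OF add_le_less_mono[OF h3_prrpqq add_strict_mono[OF conc1 add_strict_mono[OF conc1 add_strict_mono[OF conc2 conc2]]]]]) (simp_all only: P, (simp_all add: eqs algebra_simps)?)
  subgoal premises P by (rule lt_cert[OF add_strict_mono[OF h_prrp add_strict_mono[OF conc1 conc2]]]) (simp_all only: P, (simp_all add: eqs algebra_simps)?)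
  done

lemma cyc2:
  assumes n0: "hat ((pp + Tan (a3 - a2)) * qr + pr * qp) \<noteq> SZero" and n1: "hat ((pp + Tan (a2 - a1)) * rq + pq * rp) \<noteq> SZero"
  shows "sval (hat ((pp + Tan (a3 - a2)) * qr + pr * qp)) + sval (hat ((pp + Tan (a2 - a1)) * rq + pq * rp)) < a2 + a2"
  apply (rule E3q[OF n0]; rule E2r[OF n1])
  subgoal premises P by (rule lt_cert[OF add_le_less_mono[OF h3_ppqrrq conc2]]) (simp_all only: P, (simp_all add: eqs algebra_simps)?)
  subgoal premises P by (rule lt_cert[OF h_qrrq]) (simp_all only: P, (simp_all add: eqs algebra_simps)?)
  subgoal premises P by (rule lt_cert[OF add_le_less_mono[OF h3_pqqrrp conc2]]) (simp_all only: P, (simp_all add: eqs algebra_simps)?)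
  subgoal premises P by (rule lt_cert[OF add_strict_mono[OF h_qrrq conc2]]) (simp_all only: P, (simp_all add: eqs algebra_simps)?)
  subgoal premises P by (rule lt_cert[OF add_strict_mono[OF h_qrrq add_strict_mono[OF conc1 conc2]]]) (simp_all only: P, (simp_all add: eqs algebra_simps)?)
  subgoal premises P by (rule lt_cert[OF add_le_less_mono[OF h3_pqqrrp add_strict_mono[OF conc1 add_strict_mono[OF conc2 conc2]]]]) (simp_all only: P, (simp_all add: eqs algebra_simps)?)
  subgoal premises P by (rule lt_cert[OF add_le_less_mono[OF h3_prrqqp conc2]]) (simp_all only: P, (simp_all add: eqs algebra_simps)?)
  subgoal premises P by (rule lt_cert[OF add_le_less_mono[OF h3_prrqqp add_strict_mono[OF conc1 conc2]]]) (simp_all only: P, (simp_all add: eqs algebra_simps)?)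
  subgoal premises P by (rule lt_cert[OF add_strict_mono[OF h_pqqp h_prrp]]) (simp_all only: P, (simp_all add: eqs algebra_simps)?)
  done

lemma cyc3:
  assumes n0: "hat (pq * (rr + Tan (a2 - a1)) + pr * rq) \<noteq> SZero" and n1: "hat ((pp + Tan (a3 - a2)) * qr + pr * qp) \<noteq> SZero" and n2: "hat (qp * rq + (qq + Tan a1) * rp) \<noteq> SZero"
  shows "sval (hat (pq * (rr + Tan (a2 - a1)) + pr * rq)) + sval (hat ((pp + Tan (a3 - a2)) * qr + pr * qp)) + sval (hat (qp * rq + (qq + Tan a1) * rp)) < (a1 + a1) + a2 + a2"
  apply (rule E2p[OF n0]; rule E3q[OF n1]; rule E1r[OF n2])
  subgoal premises P by (rule lt_cert[OF add_strict_mono[OF hrr add_strict_mono[OF h_pqqp h_qrrq]]]) (simp_all only: P, (simp_all add: eqs algebra_simps)?)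
  subgoal premises P by (rule lt_cert[OF add_le_less_mono[OF h3_ppqqrr add_le_less_mono[OF h3_pqqrrp add_strict_mono[OF conc1 add_strict_mono[OF conc1 add_strict_mono[OF conc2 conc2]]]]]]) (simp_all only: P, (simp_all add: eqs algebra_simps)?)
  subgoal premises P by (rule lt_cert[OF add_strict_mono[OF hrr add_le_less_mono[OF h3_pqqrrp conc2]]]) (simp_all only: P, (simp_all add: eqs algebra_simps)?)
  subgoal premises P by (rule lt_cert[OF add_strict_mono[OF h_qrrq add_le_less_mono[OF h3_pqqprr add_strict_mono[OF conc1 add_strict_mono[OF conc1 add_strict_mono[OF conc2 conc2]]]]]]) (simp_all only: P, (simp_all add: eqs algebra_simps)?)
  subgoal premises P by (rule lt_cert[OF add_strict_mono[OF h_qqrr add_le_less_mono[OF h3_pqqrrp add_strict_mono[OF conc1 add_strict_mono[OF conc1 add_strict_mono[OF conc2 conc2]]]]]]) (simp_all only: P, (simp_all add: eqs algebra_simps)?)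
  subgoal premises P by (rule lt_cert[OF add_strict_mono[OF hrr add_le_less_mono[OF h3_pqqrrp add_strict_mono[OF conc1 add_strict_mono[OF conc2 conc2]]]]]) (simp_all only: P, (simp_all add: eqs algebra_simps)?)
  subgoal premises P by (rule lt_cert[OF add_le_less_mono[OF h3_pqqprr add_le_less_mono[OF h3_prrqqp add_strict_mono[OF conc1 add_strict_mono[OF conc1 add_strict_mono[OF conc2 conc2]]]]]]) (simp_all only: P, (simp_all add: eqs algebra_simps)?)
  subgoal premises P by (rule lt_cert[OF add_strict_mono[OF hqq add_strict_mono[OF hrr add_strict_mono[OF h_pqqp h_prrp]]]]) (simp_all only: P, (simp_all add: eqs algebra_simps)?)
  subgoal premises P by (rule lt_cert[OF add_strict_mono[OF hrr add_strict_mono[OF h_pqqp h_prrp]]]) (simp_all only: P, (simp_all add: eqs algebra_simps)?)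
  subgoal premises P by (rule lt_cert[OF add_strict_mono[OF h_pqqp add_strict_mono[OF h_qrrq conc1]]]) (simp_all only: P, (simp_all add: eqs algebra_simps)?)
  subgoal premises P by (rule lt_cert[OF add_le_less_mono[OF h3_pqqrrp add_strict_mono[OF conc1 add_strict_mono[OF conc1 conc2]]]]) (simp_all only: P, (simp_all add: eqs algebra_simps)?)
  subgoal premises P by (rule lt_cert[OF add_le_less_mono[OF h3_pqqrrp add_strict_mono[OF conc1 conc2]]]) (simp_all only: P, (simp_all add: eqs algebra_simps)?)
  subgoal premises P by (rule lt_cert[OF add_strict_mono[OF h_pqqp add_strict_mono[OF h_qrrq add_strict_mono[OF conc1 add_strict_mono[OF conc1 conc2]]]]]) (simp_all only: P, (simp_all add: eqs algebra_simps)?)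
  subgoal premises P by (rule lt_cert[OF add_strict_mono[OF hqq add_le_less_mono[OF h3_pqqrrp add_strict_mono[OF conc1 add_strict_mono[OF conc1 add_strict_mono[OF conc2 conc2]]]]]]) (simp_all only: P, (simp_all add: eqs algebra_simps)?)
  subgoal premises P by (rule lt_cert[OF add_le_less_mono[OF h3_pqqrrp add_strict_mono[OF conc1 add_strict_mono[OF conc1 add_strict_mono[OF conc2 conc2]]]]]) (simp_all only: P, (simp_all add: eqs algebra_simps)?)
  subgoal premises P by (rule lt_cert[OF add_strict_mono[OF h_pqqp add_le_less_mono[OF h3_prrqqp add_strict_mono[OF conc1 add_strict_mono[OF conc1 conc2]]]]]) (simp_all only: P, (simp_all add: eqs algebra_simps)?)
  subgoal premises P by (rule lt_cert[OF add_strict_mono[OF hqq add_strict_mono[OF h_pqqp add_strict_mono[OF h_prrp conc1]]]]) (simp_all only: P, (simp_all add: eqs algebra_simps)?)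
  subgoal premises P by (rule lt_cert[OF add_strict_mono[OF h_pqqp add_strict_mono[OF h_prrp conc1]]]) (simp_all only: P, (simp_all add: eqs algebra_simps)?)
  subgoal premises P by (rule lt_cert[OF add_le_less_mono[OF h3_ppqrrq add_le_less_mono[OF h3_prrqqp add_strict_mono[OF conc1 add_strict_mono[OF conc1 add_strict_mono[OF conc2 conc2]]]]]]) (simp_all only: P, (simp_all add: eqs algebra_simps)?)
  subgoal premises P by (rule lt_cert[OF add_strict_mono[OF hqq add_strict_mono[OF h_prrp h_qrrq]]]) (simp_all only: P, (simp_all add: eqs algebra_simps)?)
  subgoal premises P by (rule lt_cert[OF add_strict_mono[OF h_prrp h_qrrq]]) (simp_all only: P, (simp_all add: eqs algebra_simps)?)
  subgoal premises P by (rule lt_cert[OF add_strict_mono[OF h_qrrq add_le_less_mono[OF h3_prrqqp add_strict_mono[OF conc1 add_strict_mono[OF conc1 add_strict_mono[OF conc2 conc2]]]]]]) (simp_all only: P, (simp_all add: eqs algebra_simps)?)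
  subgoal premises P by (rule lt_cert[OF add_strict_mono[OF h_qrrq add_le_less_mono[OF h3_prrpqq add_strict_mono[OF conc1 add_strict_mono[OF conc1 add_strict_mono[OF conc2 conc2]]]]]]) (simp_all only: P, (simp_all add: eqs algebra_simps)?)
  subgoal premises P by (rule lt_cert[OF add_strict_mono[OF h_prrp add_strict_mono[OF h_qrrq add_strict_mono[OF conc1 conc2]]]]) (simp_all only: P, (simp_all add: eqs algebra_simps)?)
  subgoal premises P by (rule lt_cert[OF add_le_less_mono[OF h3_prrqqp add_le_less_mono[OF h3_prrqqp add_strict_mono[OF conc1 add_strict_mono[OF conc1 add_strict_mono[OF conc2 conc2]]]]]]) (simp_all only: P, (simp_all add: eqs algebra_simps)?)
  subgoal premises P by (rule lt_cert[OF add_le_less_mono[OF h3_prrpqq add_le_less_mono[OF h3_prrqqp add_strict_mono[OF conc1 add_strict_mono[OF conc1 add_strict_mono[OF conc2 conc2]]]]]]) (simp_all only: P, (simp_all add: eqs algebra_simps)?)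
  subgoal premises P by (rule lt_cert[OF add_strict_mono[OF h_prrp add_le_less_mono[OF h3_prrqqp add_strict_mono[OF conc1 conc2]]]]) (simp_all only: P, (simp_all add: eqs algebra_simps)?)
  done

lemma cyc4:
  assumes n0: "hat (pq * qr + pr * (qq + Tan (a3 - a2))) \<noteq> SZero" and n1: "hat ((pp + Tan (a2 - a1)) * rq + pq * rp) \<noteq> SZero" and n2: "hat (qp * (rr + Tan a1) + qr * rp) \<noteq> SZero"
  shows "sval (hat (pq * qr + pr * (qq + Tan (a3 - a2)))) + sval (hat ((pp + Tan (a2 - a1)) * rq + pq * rp)) + sval (hat (qp * (rr + Tan a1) + qr * rp)) < (a1 + a1) + a2 + a2"
  apply (rule E3p[OF n0]; rule E2r[OF n1]; rule E1q[OF n2])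
  subgoal premises P by (rule lt_cert[OF add_strict_mono[OF hrr add_strict_mono[OF h_pqqp h_qrrq]]]) (simp_all only: P, (simp_all add: eqs algebra_simps)?)
  subgoal premises P by (rule lt_cert[OF add_strict_mono[OF h_pqqp h_qrrq]]) (simp_all only: P, (simp_all add: eqs algebra_simps)?)
  subgoal premises P by (rule lt_cert[OF add_le_less_mono[OF h3_ppqrrq add_le_less_mono[OF h3_pqqrrp add_strict_mono[OF conc1 add_strict_mono[OF conc1 add_strict_mono[OF conc2 conc2]]]]]]) (simp_all only: P, (simp_all add: eqs algebra_simps)?)
  subgoal premises P by (rule lt_cert[OF add_strict_mono[OF hrr add_strict_mono[OF h_pqqp add_strict_mono[OF h_qrrq conc1]]]]) (simp_all only: P, (simp_all add: eqs algebra_simps)?)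
  subgoal premises P by (rule lt_cert[OF add_strict_mono[OF h_pqqp add_strict_mono[OF h_qrrq conc1]]]) (simp_all only: P, (simp_all add: eqs algebra_simps)?)
  subgoal premises P by (rule lt_cert[OF add_strict_mono[OF h_qrrq add_le_less_mono[OF h3_pqqrrp add_strict_mono[OF conc1 add_strict_mono[OF conc1 conc2]]]]]) (simp_all only: P, (simp_all add: eqs algebra_simps)?)
  subgoal premises P by (rule lt_cert[OF add_le_less_mono[OF h3_pqqprr add_le_less_mono[OF h3_pqqrrp add_strict_mono[OF conc1 add_strict_mono[OF conc1 add_strict_mono[OF conc2 conc2]]]]]]) (simp_all only: P, (simp_all add: eqs algebra_simps)?)
  subgoal premises P by (rule lt_cert[OF add_strict_mono[OF h_pqqp add_le_less_mono[OF h3_pqqrrp add_strict_mono[OF conc1 conc2]]]]) (simp_all only: P, (simp_all add: eqs algebra_simps)?)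
  subgoal premises P by (rule lt_cert[OF add_le_less_mono[OF h3_pqqrrp add_le_less_mono[OF h3_pqqrrp add_strict_mono[OF conc1 add_strict_mono[OF conc1 add_strict_mono[OF conc2 conc2]]]]]]) (simp_all only: P, (simp_all add: eqs algebra_simps)?)
  subgoal premises P by (rule lt_cert[OF add_le_less_mono[OF h3_ppqqrr add_le_less_mono[OF h3_prrqqp add_strict_mono[OF conc1 add_strict_mono[OF conc1 add_strict_mono[OF conc2 conc2]]]]]]) (simp_all only: P, (simp_all add: eqs algebra_simps)?)
  subgoal premises P by (rule lt_cert[OF add_strict_mono[OF hqq add_le_less_mono[OF h3_prrqqp conc2]]]) (simp_all only: P, (simp_all add: eqs algebra_simps)?)
  subgoal premises P by (rule lt_cert[OF add_strict_mono[OF hqq add_strict_mono[OF h_prrp h_qrrq]]]) (simp_all only: P, (simp_all add: eqs algebra_simps)?)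
  subgoal premises P by (rule lt_cert[OF add_strict_mono[OF h_qqrr add_le_less_mono[OF h3_prrqqp add_strict_mono[OF conc1 add_strict_mono[OF conc1 conc2]]]]]) (simp_all only: P, (simp_all add: eqs algebra_simps)?)
  subgoal premises P by (rule lt_cert[OF add_strict_mono[OF hqq add_le_less_mono[OF h3_prrqqp add_strict_mono[OF conc1 conc2]]]]) (simp_all only: P, (simp_all add: eqs algebra_simps)?)
  subgoal premises P by (rule lt_cert[OF add_strict_mono[OF hqq add_strict_mono[OF h_prrp add_strict_mono[OF h_qrrq conc1]]]]) (simp_all only: P, (simp_all add: eqs algebra_simps)?)
  subgoal premises P by (rule lt_cert[OF add_strict_mono[OF hqq add_strict_mono[OF hrr add_strict_mono[OF h_pqqp h_prrp]]]]) (simp_all only: P, (simp_all add: eqs algebra_simps)?)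
  subgoal premises P by (rule lt_cert[OF add_strict_mono[OF hqq add_strict_mono[OF h_pqqp h_prrp]]]) (simp_all only: P, (simp_all add: eqs algebra_simps)?)
  subgoal premises P by (rule lt_cert[OF add_le_less_mono[OF h3_prrpqq add_le_less_mono[OF h3_pqqrrp add_strict_mono[OF conc1 add_strict_mono[OF conc1 add_strict_mono[OF conc2 conc2]]]]]]) (simp_all only: P, (simp_all add: eqs algebra_simps)?)
  subgoal premises P by (rule lt_cert[OF add_strict_mono[OF h_pprr add_le_less_mono[OF h3_prrqqp add_strict_mono[OF conc1 add_strict_mono[OF conc1 add_strict_mono[OF conc2 conc2]]]]]]) (simp_all only: P, (simp_all add: eqs algebra_simps)?)
  subgoal premises P by (rule lt_cert[OF add_le_less_mono[OF h3_prrqqp add_strict_mono[OF conc1 add_strict_mono[OF conc2 conc2]]]]) (simp_all only: P, (simp_all add: eqs algebra_simps)?)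
  subgoal premises P by (rule lt_cert[OF add_strict_mono[OF h_prrp add_le_less_mono[OF h3_ppqrrq add_strict_mono[OF conc1 add_strict_mono[OF conc1 add_strict_mono[OF conc2 conc2]]]]]]) (simp_all only: P, (simp_all add: eqs algebra_simps)?)
  subgoal premises P by (rule lt_cert[OF add_strict_mono[OF hrr add_le_less_mono[OF h3_prrqqp add_strict_mono[OF conc1 add_strict_mono[OF conc1 add_strict_mono[OF conc2 conc2]]]]]]) (simp_all only: P, (simp_all add: eqs algebra_simps)?)
  subgoal premises P by (rule lt_cert[OF add_le_less_mono[OF h3_prrqqp add_strict_mono[OF conc1 add_strict_mono[OF conc1 add_strict_mono[OF conc2 conc2]]]]]) (simp_all only: P, (simp_all add: eqs algebra_simps)?)
  subgoal premises P by (rule lt_cert[OF add_strict_mono[OF h_prrp add_strict_mono[OF h_qrrq add_strict_mono[OF conc1 add_strict_mono[OF conc1 conc2]]]]]) (simp_all only: P, (simp_all add: eqs algebra_simps)?)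
  subgoal premises P by (rule lt_cert[OF add_strict_mono[OF h_prrp add_le_less_mono[OF h3_pqqprr add_strict_mono[OF conc1 add_strict_mono[OF conc1 add_strict_mono[OF conc2 conc2]]]]]]) (simp_all only: P, (simp_all add: eqs algebra_simps)?)
  subgoal premises P by (rule lt_cert[OF add_strict_mono[OF h_pqqp add_strict_mono[OF h_prrp add_strict_mono[OF conc1 conc2]]]]) (simp_all only: P, (simp_all add: eqs algebra_simps)?)
  subgoal premises P by (rule lt_cert[OF add_strict_mono[OF h_prrp add_le_less_mono[OF h3_pqqrrp add_strict_mono[OF conc1 add_strict_mono[OF conc1 add_strict_mono[OF conc2 conc2]]]]]]) (simp_all only: P, (simp_all add: eqs algebra_simps)?)
  done

end



locale core1 =
  fixes pp pq pr qp qq qr rp rq rr :: "'a::linordered_ab_group_add st" and a1 a2 a3 :: 'a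
  assumes hpp_nz: "pp \<noteq> SZero" and hpp: "sval pp = a1"
  and hqq: "qq \<noteq> SZero \<Longrightarrow> sval qq < a1"
  and hrr: "rr \<noteq> SZero \<Longrightarrow> sval rr < a1"
  and hpq_nz: "pq \<noteq> SZero" and hqp_nz: "qp \<noteq> SZero" and hqp_eq: "sval qp = a2 - sval pq"
  and h_ppqq: "qq \<noteq> SZero \<Longrightarrow> sval pp + sval qq < a2"
  and h_pprr: "rr \<noteq> SZero \<Longrightarrow> sval pp + sval rr < a2"
  and h_prrp: "pr \<noteq> SZero \<Longrightarrow> rp \<noteq> SZero \<Longrightarrow> sval pr + sval rp < a2"
  and h_qqrr: "qq \<noteq> SZero \<Longrightarrow> rr \<noteq> SZero \<Longrightarrow> sval qq + sval rr < a2"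
  and h_qrrq: "qr \<noteq> SZero \<Longrightarrow> rq \<noteq> SZero \<Longrightarrow> sval qr + sval rq < a2"
  and h3_ppqqrr: "qq \<noteq> SZero \<Longrightarrow> rr \<noteq> SZero \<Longrightarrow> sval pp + sval qq + sval rr \<le> a3"
  and h3_ppqrrq: "qr \<noteq> SZero \<Longrightarrow> rq \<noteq> SZero \<Longrightarrow> sval pp + sval qr + sval rq \<le> a3"
  and h3_pqqprr: "pq \<noteq> SZero \<Longrightarrow> qp \<noteq> SZero \<Longrightarrow> rr \<noteq> SZero \<Longrightarrow> sval pq + sval qp + sval rr \<le> a3"
  and h3_prrpqq: "pr \<noteq> SZero \<Longrightarrow> rp \<noteq> SZero \<Longrightarrow> qq \<noteq> SZero \<Longrightarrow> sval pr + sval rp + sval qq \<le> a3"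
  and h3_pqqrrp: "pq \<noteq> SZero \<Longrightarrow> qr \<noteq> SZero \<Longrightarrow> rp \<noteq> SZero \<Longrightarrow> sval pq + sval qr + sval rp \<le> a3"
  and h3_prrqqp: "pr \<noteq> SZero \<Longrightarrow> rq \<noteq> SZero \<Longrightarrow> qp \<noteq> SZero \<Longrightarrow> sval pr + sval rq + sval qp \<le> a3"
  and conc1: "a2 < a1 + a1" and conc2: "a1 + a3 < a2 + a2"
begin
lemmas eqs = hpp_nz hpp hpq_nz hqp_nz hqp_eq

lemma l21: "a2 - a1 < a1" using conc1 by (simp add: diff_less_eq)
lemma l32: "a3 - a2 < a1"
  by (rule lt_cert[OF add_strict_mono[OF conc1 conc2]]) (simp add: algebra_simps)
lemma l32b: "a3 - a2 < a2 - a1"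
  by (rule lt_cert[OF conc2]) (simp add: algebra_simps)

lemma diag1: "hat ((qq + Tan a1) * (rr + Tan a1) + qr * rq) = Tan (a1 + a1)"
proof -
  have 1: "qq + Tan a1 = Tan a1" by (rule st_sum_dom2) (use hqq in auto)
  have 2: "rr + Tan a1 = Tan a1" by (rule st_sum_dom2) (use hrr in auto)
  have 3: "qr * rq = SZero \<or> sval (qr * rq) \<le> a1 + a1"
  proof (cases "qr * rq = SZero")
    case False
    then have "qr \<noteq> SZero" "rq \<noteq> SZero" by (auto simp: st_mult_zero_iff)
    then have "sval qr + sval rq < a1 + a1" using h_qrrq conc1 by (meson less_trans)
    then show ?thesis using \<open>qr \<noteq> SZero\<close> \<open>rq \<noteq> SZero\<close> by (simp add: st_sval_mult less_imp_le)
  qed simp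
  show ?thesis unfolding 1 2 by (rule st_hat_sum_val) (use 3 in auto)
qed

lemma diag2: "hat ((pp + Tan (a2 - a1)) * (rr + Tan (a2 - a1)) + pr * rp) = Tan a2"
proof -
  have 1: "pp + Tan (a2 - a1) = pp" by (rule st_sum_dom) (use hpp_nz hpp l21 in auto)
  have 2: "rr + Tan (a2 - a1) = Tan (a2 - a1)" by (rule st_sum_dom2) (use h_pprr hpp in \<open>auto simp: less_diff_eq add.commute\<close>)
  have 3: "pr * rp = SZero \<or> sval (pr * rp) \<le> a2"
  proof (cases "pr * rp = SZero")
    case False
    then have "pr \<noteq> SZero" "rp \<noteq> SZero" by (auto simp: st_mult_zero_iff)
    then show ?thesis using h_prrp[OF \<open>pr \<noteq> SZero\<close> \<open>rp \<noteq> SZero\<close>] by (simp add: st_sval_mult less_imp_le)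
  qed simp
  show ?thesis unfolding 1 2 by (rule st_hat_sum_val) (use 3 hpp_nz hpp in \<open>auto simp: st_mult_zero_iff st_sval_mult\<close>)
qed

lemma diag3: "hat ((pp + Tan (a3 - a2)) * (qq + Tan (a3 - a2)) + pq * qp) = Tan a2"
proof -
  have 1: "pp + Tan (a3 - a2) = pp" by (rule st_sum_dom) (use hpp_nz hpp l32 in auto)
  have 3: "(pp + Tan (a3 - a2)) * (qq + Tan (a3 - a2)) = SZero \<or> sval ((pp + Tan (a3 - a2)) * (qq + Tan (a3 - a2))) \<le> a2"
  proof -
    have c2: "a1 + (a3 - a2) < a2" by (rule lt_cert[OF conc2]) (simp add: algebra_simps)
    have "sval (qq + Tan (a3 - a2)) = sval qq \<and> qq \<noteq> SZero \<or> sval (qq + Tan (a3 - a2)) = a3 - a2"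
      by (simp add: diag_sval)
    then show ?thesis unfolding 1 using h_ppqq c2 hpp_nz hpp
      by (auto simp: st_sval_mult diag_nz)
  qed
  show ?thesis by (subst add.commute, rule st_hat_sum_val) (use 3 hpq_nz hqp_nz hqp_eq in \<open>auto simp: st_mult_zero_iff st_sval_mult\<close>)
qed

lemma cyc0:
  assumes n0: "hat (pq * (rr + Tan (a2 - a1)) + pr * rq) \<noteq> SZero" and n1: "hat (qp * (rr + Tan a1) + qr * rp) \<noteq> SZero"
  shows "sval (hat (pq * (rr + Tan (a2 - a1)) + pr * rq)) + sval (hat (qp * (rr + Tan a1) + qr * rp)) < (a1 + a1) + a2"
  apply (rule E2p[OF n0]; rule E1q[OF n1])
  subgoal premises P by (rule lt_cert[OF add_strict_mono[OF hrr hrr]]) (simp_all only: P, (simp_all add: eqs algebra_simps)?)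
  subgoal premises P by (rule lt_cert[OF hrr]) (simp_all only: P, (simp_all add: eqs algebra_simps)?)
  subgoal premises P by (rule lt_cert[OF add_strict_mono[OF hrr add_le_less_mono[OF h3_pqqrrp add_strict_mono[OF conc1 conc2]]]]) (simp_all only: P, (simp_all add: eqs algebra_simps)?)
  subgoal premises P by (rule lt_cert[OF add_strict_mono[OF hrr conc1]]) (simp_all only: P, (simp_all add: eqs algebra_simps)?)
  subgoal premises P by (rule lt_cert[OF conc1]) (simp_all only: P, (simp_all add: eqs algebra_simps)?)
  subgoal premises P by (rule lt_cert[OF add_le_less_mono[OF h3_pqqrrp add_strict_mono[OF conc1 add_strict_mono[OF conc1 conc2]]]]) (simp_all only: P, (simp_all add: eqs algebra_simps)?)
  subgoal premises P by (rule lt_cert[OF add_strict_mono[OF hrr add_le_less_mono[OF h3_prrqqp add_strict_mono[OF conc1 conc2]]]]) (simp_all only: P, (simp_all add: eqs algebra_simps)?)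
  subgoal premises P by (rule lt_cert[OF add_le_less_mono[OF h3_prrqqp add_strict_mono[OF conc1 conc2]]]) (simp_all only: P, (simp_all add: eqs algebra_simps)?)
  subgoal premises P by (rule lt_cert[OF add_strict_mono[OF h_prrp add_strict_mono[OF h_qrrq conc1]]]) (simp_all only: P, (simp_all add: eqs algebra_simps)?)
  done

lemma cyc1:
  assumes n0: "hat (pq * qr + pr * (qq + Tan (a3 - a2))) \<noteq> SZero" and n1: "hat (qp * rq + (qq + Tan a1) * rp) \<noteq> SZero"
  shows "sval (hat (pq * qr + pr * (qq + Tan (a3 - a2)))) + sval (hat (qp * rq + (qq + Tan a1) * rp)) < (a1 + a1) + a2"
  apply (rule E3p[OF n0]; rule E1r[OF n1])
  subgoal premises P by (rule lt_cert[OF add_strict_mono[OF h_qrrq conc1]]) (simp_all only: P, (simp_all add: eqs algebra_simps)?)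
  subgoal premises P by (rule lt_cert[OF add_strict_mono[OF hqq add_le_less_mono[OF h3_pqqrrp add_strict_mono[OF conc1 conc2]]]]) (simp_all only: P, (simp_all add: eqs algebra_simps)?)
  subgoal premises P by (rule lt_cert[OF add_le_less_mono[OF h3_pqqrrp add_strict_mono[OF conc1 conc2]]]) (simp_all only: P, (simp_all add: eqs algebra_simps)?)
  subgoal premises P by (rule lt_cert[OF add_strict_mono[OF hqq add_le_less_mono[OF h3_prrqqp add_strict_mono[OF conc1 conc2]]]]) (simp_all only: P, (simp_all add: eqs algebra_simps)?)
  subgoal premises P by (rule lt_cert[OF add_strict_mono[OF hqq add_strict_mono[OF hqq h_prrp]]]) (simp_all only: P, (simp_all add: eqs algebra_simps)?)
  subgoal premises P by (rule lt_cert[OF add_strict_mono[OF hqq h_prrp]]) (simp_all only: P, (simp_all add: eqs algebra_simps)?)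
  subgoal premises P by (rule lt_cert[OF add_le_less_mono[OF h3_prrqqp add_strict_mono[OF conc1 add_strict_mono[OF conc1 add_strict_mono[OF conc2 conc2]]]]]) (simp_all only: P, (simp_all add: eqs algebra_simps)?)
  subgoal premises P by (rule lt_cert[OF add_le_less_mono[OF h3_prrpqq add_strict_mono[OF conc1 add_strict_mono[OF conc1 add_strict_mono[OF conc2 conc2]]]]]) (simp_all only: P, (simp_all add: eqs algebra_simps)?)
  subgoal premises P by (rule lt_cert[OF add_strict_mono[OF h_prrp add_strict_mono[OF conc1 conc2]]]) (simp_all only: P, (simp_all add: eqs algebra_simps)?)
  done

lemma cyc2:
  assumes n0: "hat ((pp + Tan (a3 - a2)) * qr + pr * qp) \<noteq> SZero" and n1: "hat ((pp + Tan (a2 - a1)) * rq + pq * rp) \<noteq> SZero"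
  shows "sval (hat ((pp + Tan (a3 - a2)) * qr + pr * qp)) + sval (hat ((pp + Tan (a2 - a1)) * rq + pq * rp)) < a2 + a2"
  apply (rule E3q[OF n0]; rule E2r[OF n1])
  subgoal premises P by (rule lt_cert[OF add_le_less_mono[OF h3_ppqrrq conc2]]) (simp_all only: P, (simp_all add: eqs algebra_simps)?)
  subgoal premises P by (rule lt_cert[OF h_qrrq]) (simp_all only: P, (simp_all add: eqs algebra_simps)?)
  subgoal premises P by (rule lt_cert[OF add_le_less_mono[OF h3_pqqrrp conc2]]) (simp_all only: P, (simp_all add: eqs algebra_simps)?)
  subgoal premises P by (rule lt_cert[OF add_strict_mono[OF h_qrrq conc2]]) (simp_all only: P, (simp_all add: eqs algebra_simps)?)
  subgoal premises P by (rule lt_cert[OF add_strict_mono[OF h_qrrq add_strict_mono[OF conc1 conc2]]]) (simp_all only: P, (simp_all add: eqs algebra_simps)?)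
  subgoal premises P by (rule lt_cert[OF add_le_less_mono[OF h3_pqqrrp add_strict_mono[OF conc1 add_strict_mono[OF conc2 conc2]]]]) (simp_all only: P, (simp_all add: eqs algebra_simps)?)
  subgoal premises P by (rule lt_cert[OF add_le_less_mono[OF h3_prrqqp conc2]]) (simp_all only: P, (simp_all add: eqs algebra_simps)?)
  subgoal premises P by (rule lt_cert[OF add_le_less_mono[OF h3_prrqqp add_strict_mono[OF conc1 conc2]]]) (simp_all only: P, (simp_all add: eqs algebra_simps)?)
  subgoal premises P by (rule lt_cert[OF h_prrp]) (simp_all only: P, (simp_all add: eqs algebra_simps)?)
  done

lemma cyc3:
  assumes n0: "hat (pq * (rr + Tan (a2 - a1)) + pr * rq) \<noteq> SZero" and n1: "hat ((pp + Tan (a3 - a2)) * qr + pr * qp) \<noteq> SZero" and n2: "hat (qp * rq + (qq + Tan a1) * rp) \<noteq> SZero"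
  shows "sval (hat (pq * (rr + Tan (a2 - a1)) + pr * rq)) + sval (hat ((pp + Tan (a3 - a2)) * qr + pr * qp)) + sval (hat (qp * rq + (qq + Tan a1) * rp)) < (a1 + a1) + a2 + a2"
  apply (rule E2p[OF n0]; rule E3q[OF n1]; rule E1r[OF n2])
  subgoal premises P by (rule lt_cert[OF add_strict_mono[OF hrr h_qrrq]]) (simp_all only: P, (simp_all add: eqs algebra_simps)?)
  subgoal premises P by (rule lt_cert[OF add_le_less_mono[OF h3_ppqqrr add_le_less_mono[OF h3_pqqrrp add_strict_mono[OF conc1 add_strict_mono[OF conc1 add_strict_mono[OF conc2 conc2]]]]]]) (simp_all only: P, (simp_all add: eqs algebra_simps)?)
  subgoal premises P by (rule lt_cert[OF add_strict_mono[OF hrr add_le_less_mono[OF h3_pqqrrp conc2]]]) (simp_all only: P, (simp_all add: eqs algebra_simps)?)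
  subgoal premises P by (rule lt_cert[OF add_strict_mono[OF h_qrrq add_le_less_mono[OF h3_pqqprr add_strict_mono[OF conc1 add_strict_mono[OF conc1 add_strict_mono[OF conc2 conc2]]]]]]) (simp_all only: P, (simp_all add: eqs algebra_simps)?)
  subgoal premises P by (rule lt_cert[OF add_strict_mono[OF h_qqrr add_le_less_mono[OF h3_pqqrrp add_strict_mono[OF conc1 add_strict_mono[OF conc1 add_strict_mono[OF conc2 conc2]]]]]]) (simp_all only: P, (simp_all add: eqs algebra_simps)?)
  subgoal premises P by (rule lt_cert[OF add_strict_mono[OF hrr add_le_less_mono[OF h3_pqqrrp add_strict_mono[OF conc1 add_strict_mono[OF conc2 conc2]]]]]) (simp_all only: P, (simp_all add: eqs algebra_simps)?)
  subgoal premises P by (rule lt_cert[OF add_le_less_mono[OF h3_pqqprr add_le_less_mono[OF h3_prrqqp add_strict_mono[OF conc1 add_strict_mono[OF conc1 add_strict_mono[OF conc2 conc2]]]]]]) (simp_all only: P, (simp_all add: eqs algebra_simps)?)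
  subgoal premises P by (rule lt_cert[OF add_strict_mono[OF hqq add_strict_mono[OF hrr h_prrp]]]) (simp_all only: P, (simp_all add: eqs algebra_simps)?)
  subgoal premises P by (rule lt_cert[OF add_strict_mono[OF hrr h_prrp]]) (simp_all only: P, (simp_all add: eqs algebra_simps)?)
  subgoal premises P by (rule lt_cert[OF add_strict_mono[OF h_qrrq conc1]]) (simp_all only: P, (simp_all add: eqs algebra_simps)?)
  subgoal premises P by (rule lt_cert[OF add_strict_mono[OF h_ppqq add_le_less_mono[OF h3_pqqrrp add_strict_mono[OF conc1 add_strict_mono[OF conc1 conc2]]]]]) (simp_all only: P, (simp_all add: eqs algebra_simps)?)
  subgoal premises P by (rule lt_cert[OF add_le_less_mono[OF h3_pqqrrp add_strict_mono[OF conc1 conc2]]]) (simp_all only: P, (simp_all add: eqs algebra_simps)?)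
  subgoal premises P by (rule lt_cert[OF add_strict_mono[OF h_qrrq add_strict_mono[OF conc1 add_strict_mono[OF conc1 conc2]]]]) (simp_all only: P, (simp_all add: eqs algebra_simps)?)
  subgoal premises P by (rule lt_cert[OF add_strict_mono[OF hqq add_le_less_mono[OF h3_pqqrrp add_strict_mono[OF conc1 add_strict_mono[OF conc1 add_strict_mono[OF conc2 conc2]]]]]]) (simp_all only: P, (simp_all add: eqs algebra_simps)?)
  subgoal premises P by (rule lt_cert[OF add_le_less_mono[OF h3_pqqrrp add_strict_mono[OF conc1 add_strict_mono[OF conc1 add_strict_mono[OF conc2 conc2]]]]]) (simp_all only: P, (simp_all add: eqs algebra_simps)?)
  subgoal premises P by (rule lt_cert[OF add_le_less_mono[OF h3_prrqqp add_strict_mono[OF conc1 add_strict_mono[OF conc1 conc2]]]]) (simp_all only: P, (simp_all add: eqs algebra_simps)?)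
  subgoal premises P by (rule lt_cert[OF add_strict_mono[OF hqq add_strict_mono[OF h_prrp conc1]]]) (simp_all only: P, (simp_all add: eqs algebra_simps)?)
  subgoal premises P by (rule lt_cert[OF add_strict_mono[OF h_prrp conc1]]) (simp_all only: P, (simp_all add: eqs algebra_simps)?)
  subgoal premises P by (rule lt_cert[OF add_le_less_mono[OF h3_ppqrrq add_le_less_mono[OF h3_prrqqp add_strict_mono[OF conc1 add_strict_mono[OF conc1 add_strict_mono[OF conc2 conc2]]]]]]) (simp_all only: P, (simp_all add: eqs algebra_simps)?)
  subgoal premises P by (rule lt_cert[OF add_strict_mono[OF hqq add_strict_mono[OF h_prrp h_qrrq]]]) (simp_all only: P, (simp_all add: eqs algebra_simps)?)
  subgoal premises P by (rule lt_cert[OF add_strict_mono[OF h_prrp h_qrrq]]) (simp_all only: P, (simp_all add: eqs algebra_simps)?)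
  subgoal premises P by (rule lt_cert[OF add_strict_mono[OF h_qrrq add_le_less_mono[OF h3_prrqqp add_strict_mono[OF conc1 add_strict_mono[OF conc1 add_strict_mono[OF conc2 conc2]]]]]]) (simp_all only: P, (simp_all add: eqs algebra_simps)?)
  subgoal premises P by (rule lt_cert[OF add_strict_mono[OF h_qrrq add_le_less_mono[OF h3_prrpqq add_strict_mono[OF conc1 add_strict_mono[OF conc1 add_strict_mono[OF conc2 conc2]]]]]]) (simp_all only: P, (simp_all add: eqs algebra_simps)?)
  subgoal premises P by (rule lt_cert[OF add_strict_mono[OF h_prrp add_strict_mono[OF h_qrrq add_strict_mono[OF conc1 conc2]]]]) (simp_all only: P, (simp_all add: eqs algebra_simps)?)
  subgoal premises P by (rule lt_cert[OF add_le_less_mono[OF h3_prrqqp add_le_less_mono[OF h3_prrqqp add_strict_mono[OF conc1 add_strict_mono[OF conc1 add_strict_mono[OF conc2 conc2]]]]]]) (simp_all only: P, (simp_all add: eqs algebra_simps)?)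
  subgoal premises P by (rule lt_cert[OF add_le_less_mono[OF h3_prrpqq add_le_less_mono[OF h3_prrqqp add_strict_mono[OF conc1 add_strict_mono[OF conc1 add_strict_mono[OF conc2 conc2]]]]]]) (simp_all only: P, (simp_all add: eqs algebra_simps)?)
  subgoal premises P by (rule lt_cert[OF add_strict_mono[OF h_prrp add_le_less_mono[OF h3_prrqqp add_strict_mono[OF conc1 conc2]]]]) (simp_all only: P, (simp_all add: eqs algebra_simps)?)
  done

lemma cyc4:
  assumes n0: "hat (pq * qr + pr * (qq + Tan (a3 - a2))) \<noteq> SZero" and n1: "hat ((pp + Tan (a2 - a1)) * rq + pq * rp) \<noteq> SZero" and n2: "hat (qp * (rr + Tan a1) + qr * rp) \<noteq> SZero"
  shows "sval (hat (pq * qr + pr * (qq + Tan (a3 - a2)))) + sval (hat ((pp + Tan (a2 - a1)) * rq + pq * rp)) + sval (hat (qp * (rr + Tan a1) + qr * rp)) < (a1 + a1) + a2 + a2"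
  apply (rule E3p[OF n0]; rule E2r[OF n1]; rule E1q[OF n2])
  subgoal premises P by (rule lt_cert[OF add_strict_mono[OF hrr h_qrrq]]) (simp_all only: P, (simp_all add: eqs algebra_simps)?)
  subgoal premises P by (rule lt_cert[OF h_qrrq]) (simp_all only: P, (simp_all add: eqs algebra_simps)?)
  subgoal premises P by (rule lt_cert[OF add_le_less_mono[OF h3_ppqrrq add_le_less_mono[OF h3_pqqrrp add_strict_mono[OF conc1 add_strict_mono[OF conc1 add_strict_mono[OF conc2 conc2]]]]]]) (simp_all only: P, (simp_all add: eqs algebra_simps)?)
  subgoal premises P by (rule lt_cert[OF add_strict_mono[OF hrr add_strict_mono[OF h_qrrq conc1]]]) (simp_all only: P, (simp_all add: eqs algebra_simps)?)
  subgoal premises P by (rule lt_cert[OF add_strict_mono[OF h_qrrq conc1]]) (simp_all only: P, (simp_all add: eqs algebra_simps)?)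
  subgoal premises P by (rule lt_cert[OF add_strict_mono[OF h_qrrq add_le_less_mono[OF h3_pqqrrp add_strict_mono[OF conc1 add_strict_mono[OF conc1 conc2]]]]]) (simp_all only: P, (simp_all add: eqs algebra_simps)?)
  subgoal premises P by (rule lt_cert[OF add_le_less_mono[OF h3_pqqprr add_le_less_mono[OF h3_pqqrrp add_strict_mono[OF conc1 add_strict_mono[OF conc1 add_strict_mono[OF conc2 conc2]]]]]]) (simp_all only: P, (simp_all add: eqs algebra_simps)?)
  subgoal premises P by (rule lt_cert[OF add_le_less_mono[OF h3_pqqrrp add_strict_mono[OF conc1 conc2]]]) (simp_all only: P, (simp_all add: eqs algebra_simps)?)
  subgoal premises P by (rule lt_cert[OF add_le_less_mono[OF h3_pqqrrp add_le_less_mono[OF h3_pqqrrp add_strict_mono[OF conc1 add_strict_mono[OF conc1 add_strict_mono[OF conc2 conc2]]]]]]) (simp_all only: P, (simp_all add: eqs algebra_simps)?)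
  subgoal premises P by (rule lt_cert[OF add_le_less_mono[OF h3_ppqqrr add_le_less_mono[OF h3_prrqqp add_strict_mono[OF conc1 add_strict_mono[OF conc1 add_strict_mono[OF conc2 conc2]]]]]]) (simp_all only: P, (simp_all add: eqs algebra_simps)?)
  subgoal premises P by (rule lt_cert[OF add_strict_mono[OF hqq add_le_less_mono[OF h3_prrqqp conc2]]]) (simp_all only: P, (simp_all add: eqs algebra_simps)?)
  subgoal premises P by (rule lt_cert[OF add_strict_mono[OF hqq add_strict_mono[OF h_prrp h_qrrq]]]) (simp_all only: P, (simp_all add: eqs algebra_simps)?)
  subgoal premises P by (rule lt_cert[OF add_strict_mono[OF h_qqrr add_le_less_mono[OF h3_prrqqp add_strict_mono[OF conc1 add_strict_mono[OF conc1 conc2]]]]]) (simp_all only: P, (simp_all add: eqs algebra_simps)?)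
  subgoal premises P by (rule lt_cert[OF add_strict_mono[OF hqq add_le_less_mono[OF h3_prrqqp add_strict_mono[OF conc1 conc2]]]]) (simp_all only: P, (simp_all add: eqs algebra_simps)?)
  subgoal premises P by (rule lt_cert[OF add_strict_mono[OF hqq add_strict_mono[OF h_prrp add_strict_mono[OF h_qrrq conc1]]]]) (simp_all only: P, (simp_all add: eqs algebra_simps)?)
  subgoal premises P by (rule lt_cert[OF add_strict_mono[OF hqq add_strict_mono[OF hrr h_prrp]]]) (simp_all only: P, (simp_all add: eqs algebra_simps)?)
  subgoal premises P by (rule lt_cert[OF add_strict_mono[OF hqq h_prrp]]) (simp_all only: P, (simp_all add: eqs algebra_simps)?)
  subgoal premises P by (rule lt_cert[OF add_le_less_mono[OF h3_prrpqq add_le_less_mono[OF h3_pqqrrp add_strict_mono[OF conc1 add_strict_mono[OF conc1 add_strict_mono[OF conc2 conc2]]]]]]) (simp_all only: P, (simp_all add: eqs algebra_simps)?)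
  subgoal premises P by (rule lt_cert[OF add_strict_mono[OF h_pprr add_le_less_mono[OF h3_prrqqp add_strict_mono[OF conc1 add_strict_mono[OF conc1 add_strict_mono[OF conc2 conc2]]]]]]) (simp_all only: P, (simp_all add: eqs algebra_simps)?)
  subgoal premises P by (rule lt_cert[OF add_le_less_mono[OF h3_prrqqp add_strict_mono[OF conc1 add_strict_mono[OF conc2 conc2]]]]) (simp_all only: P, (simp_all add: eqs algebra_simps)?)
  subgoal premises P by (rule lt_cert[OF add_strict_mono[OF h_prrp add_le_less_mono[OF h3_ppqrrq add_strict_mono[OF conc1 add_strict_mono[OF conc1 add_strict_mono[OF conc2 conc2]]]]]]) (simp_all only: P, (simp_all add: eqs algebra_simps)?)
  subgoal premises P by (rule lt_cert[OF add_strict_mono[OF hrr add_le_less_mono[OF h3_prrqqp add_strict_mono[OF conc1 add_strict_mono[OF conc1 add_strict_mono[OF conc2 conc2]]]]]]) (simp_all only: P, (simp_all add: eqs algebra_simps)?)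
  subgoal premises P by (rule lt_cert[OF add_le_less_mono[OF h3_prrqqp add_strict_mono[OF conc1 add_strict_mono[OF conc1 add_strict_mono[OF conc2 conc2]]]]]) (simp_all only: P, (simp_all add: eqs algebra_simps)?)
  subgoal premises P by (rule lt_cert[OF add_strict_mono[OF h_prrp add_strict_mono[OF h_qrrq add_strict_mono[OF conc1 add_strict_mono[OF conc1 conc2]]]]]) (simp_all only: P, (simp_all add: eqs algebra_simps)?)
  subgoal premises P by (rule lt_cert[OF add_strict_mono[OF h_prrp add_le_less_mono[OF h3_pqqprr add_strict_mono[OF conc1 add_strict_mono[OF conc1 add_strict_mono[OF conc2 conc2]]]]]]) (simp_all only: P, (simp_all add: eqs algebra_simps)?)
  subgoal premises P by (rule lt_cert[OF add_strict_mono[OF h_prrp add_strict_mono[OF conc1 conc2]]]) (simp_all only: P, (simp_all add: eqs algebra_simps)?)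
  subgoal premises P by (rule lt_cert[OF add_strict_mono[OF h_prrp add_le_less_mono[OF h3_pqqrrp add_strict_mono[OF conc1 add_strict_mono[OF conc1 add_strict_mono[OF conc2 conc2]]]]]]) (simp_all only: P, (simp_all add: eqs algebra_simps)?)
  done

end



lemma dom3:
  fixes x y z :: "'a::linordered_ab_group_add st"
  assumes "ghost0 (x + y + z)" "tangible x"
  shows "(y \<noteq> SZero \<and> sval x \<le> sval y) \<or> (z \<noteq> SZero \<and> sval x \<le> sval z)"
proof (rule ccontr)
  assume "\<not> ?thesis"
  then have y: "y = SZero \<or> sval y < sval x" and z: "z = SZero \<or> sval z < sval x" by auto
  have x0: "x \<noteq> SZero" using assms(2) by (auto simp: tangible_def)
  have "x + y + z = x" using st_sum_dom[OF x0 y] st_sum_dom[OF x0 z] by simp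
  then show False using assms by (simp add: ghost0_def)
qed

lemma dom2:
  fixes x y :: "'a::linordered_ab_group_add st"
  assumes "ghost0 (x + y)" "tangible x"
  shows "y \<noteq> SZero \<and> sval x \<le> sval y"
proof (rule ccontr)
  assume "\<not> ?thesis"
  then have y: "y = SZero \<or> sval y < sval x" by auto
  have x0: "x \<noteq> SZero" using assms(2) by (auto simp: tangible_def)
  have "x + y = x" using st_sum_dom[OF x0 y] by simp
  then show False using assms by (simp add: ghost0_def)
qed

lemma contra2:
  fixes x1 :: "'a::linordered_ab_group_add"
  assumes "x1 \<le> y1" "x2 \<le> y2" "s < D" "(y1 + y2) - (x1 + x2) = s - D" shows False
proof -
  have "x1 + x2 \<le> y1 + y2" using add_mono[OF assms(1,2)] .
  then have "0 \<le> (y1 + y2) - (x1 + x2)" by simp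
  then show False using assms(3,4) by simp
qed

lemma contra3:
  fixes x1 :: "'a::linordered_ab_group_add"
  assumes "x1 \<le> y1" "x2 \<le> y2" "x3 \<le> y3" "s < D" "(y1 + y2 + y3) - (x1 + x2 + x3) = s - D" shows False
proof -
  have "x1 + x2 + x3 \<le> y1 + y2 + y3" using add_mono[OF add_mono[OF assms(1,2)] assms(3)] .
  then have "0 \<le> (y1 + y2 + y3) - (x1 + x2 + x3)" by simp
  then show False using assms(4,5) by simp
qed

lemma tan_mult_sval: "(v::'a::linordered_ab_group_add st) \<noteq> SZero \<Longrightarrow> Tan g * v \<noteq> SZero \<and> sval (Tan g * v) = g + sval v"
  by (cases v) auto

lemma tan_mult_nz: "Tan g * (v::'a::linordered_ab_group_add st) \<noteq> SZero \<Longrightarrow> v \<noteq> SZero"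
  by (cases v) auto

lemma sum123: "(\<Sum>i\<in>{1..3::nat}. f i) = f 1 + f 2 + f 3"
proof -
  have "{1..3::nat} = {1,2,3}" by auto
  then show ?thesis by (simp add: add.assoc)
qed

lemma sum12: "(\<Sum>i\<in>{1..2::nat}. f i) = f 1 + f 2"
proof -
  have "{1..2::nat} = {1,2}" by auto
  then show ?thesis by simp
qed

lemma indep3:
  fixes v :: "nat \<Rightarrow> nat \<Rightarrow> 'a::linordered_ab_group_add st"
  assumes pqr: "p < 3" "q < 3" "r < 3"
  and d: "v 1 p = Tan dA" "v 2 q = Tan dB" "v 3 r = Tan dC"
  and c12: "v 2 p \<noteq> SZero \<Longrightarrow> v 1 q \<noteq> SZero \<Longrightarrow> sval (v 2 p) + sval (v 1 q) < dA + dB"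
  and c13: "v 3 p \<noteq> SZero \<Longrightarrow> v 1 r \<noteq> SZero \<Longrightarrow> sval (v 3 p) + sval (v 1 r) < dA + dC"
  and c23: "v 3 q \<noteq> SZero \<Longrightarrow> v 2 r \<noteq> SZero \<Longrightarrow> sval (v 3 q) + sval (v 2 r) < dB + dC"
  and c123: "v 2 p \<noteq> SZero \<Longrightarrow> v 3 q \<noteq> SZero \<Longrightarrow> v 1 r \<noteq> SZero \<Longrightarrow> sval (v 2 p) + sval (v 3 q) + sval (v 1 r) < dA + dB + dC"
  and c132: "v 3 p \<noteq> SZero \<Longrightarrow> v 2 r \<noteq> SZero \<Longrightarrow> v 1 q \<noteq> SZero \<Longrightarrow> sval (v 3 p) + sval (v 2 r) + sval (v 1 q) < dA + dB + dC"
  shows "st_independent 3 v 3"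
  unfolding st_independent_def st_dependent_def
proof
  assume "\<exists>c. (\<forall>i\<in>{1..3}. tangible (c i)) \<and> (\<forall>j<3. ghost0 (\<Sum>i\<in>{1..3}. c i * v i j))"
  then obtain c where ct: "\<forall>i\<in>{1..3}. tangible (c i)" and cg: "\<forall>j<3. ghost0 (\<Sum>i\<in>{1..3}. c i * v i j)" by blast
  have "tangible (c 1)" "tangible (c 2)" "tangible (c 3)" using ct by auto
  then obtain g1 g2 g3 where g: "c 1 = Tan g1" "c 2 = Tan g2" "c 3 = Tan g3"
    by (auto simp: tangible_def)
  have rp: "ghost0 (c 1 * v 1 p + c 2 * v 2 p + c 3 * v 3 p)" using cg pqr(1) unfolding sum123 by blast
  have "ghost0 (c 1 * v 1 q + c 2 * v 2 q + c 3 * v 3 q)" using cg pqr(2) unfolding sum123 by blast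
  then have rq: "ghost0 (c 2 * v 2 q + c 1 * v 1 q + c 3 * v 3 q)" by (simp add: ac_simps)
  have "ghost0 (c 1 * v 1 r + c 2 * v 2 r + c 3 * v 3 r)" using cg pqr(3) unfolding sum123 by blast
  then have rr: "ghost0 (c 3 * v 3 r + c 1 * v 1 r + c 2 * v 2 r)" by (simp add: ac_simps)
  have P: "(v 2 p \<noteq> SZero \<and> g1 + dA \<le> g2 + sval (v 2 p)) \<or> (v 3 p \<noteq> SZero \<and> g1 + dA \<le> g3 + sval (v 3 p))"
    using dom3[OF rp] unfolding g d by (auto simp: tangible_def dest: tan_mult_nz simp: tan_mult_sval)
  have Q: "(v 1 q \<noteq> SZero \<and> g2 + dB \<le> g1 + sval (v 1 q)) \<or> (v 3 q \<noteq> SZero \<and> g2 + dB \<le> g3 + sval (v 3 q))"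
    using dom3[OF rq] unfolding g d by (auto simp: tangible_def dest: tan_mult_nz simp: tan_mult_sval)
  have R: "(v 1 r \<noteq> SZero \<and> g3 + dC \<le> g1 + sval (v 1 r)) \<or> (v 2 r \<noteq> SZero \<and> g3 + dC \<le> g2 + sval (v 2 r))"
    using dom3[OF rr] unfolding g d by (auto simp: tangible_def dest: tan_mult_nz simp: tan_mult_sval)
  show False
  proof (cases "v 2 p \<noteq> SZero \<and> g1 + dA \<le> g2 + sval (v 2 p)")
    case p2: True
    show False
    proof (cases "v 1 q \<noteq> SZero \<and> g2 + dB \<le> g1 + sval (v 1 q)")
      case True
      show False
        by (rule contra2[OF conjunct2[OF p2] conjunct2[OF True] c12[OF conjunct1[OF p2] conjunct1[OF True]]])
          (simp add: algebra_simps)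
    next
      case False
      with Q have q3: "v 3 q \<noteq> SZero \<and> g2 + dB \<le> g3 + sval (v 3 q)" by blast
      show False
      proof (cases "v 1 r \<noteq> SZero \<and> g3 + dC \<le> g1 + sval (v 1 r)")
        case True
        show False
          by (rule contra3[OF conjunct2[OF p2] conjunct2[OF q3] conjunct2[OF True] c123[OF conjunct1[OF p2] conjunct1[OF q3] conjunct1[OF True]]])
            (simp add: algebra_simps)
      next
        case False
        with R have r2: "v 2 r \<noteq> SZero \<and> g3 + dC \<le> g2 + sval (v 2 r)" by blast
        show False
          by (rule contra2[OF conjunct2[OF q3] conjunct2[OF r2] c23[OF conjunct1[OF q3] conjunct1[OF r2]]])
            (simp add: algebra_simps)
      qed
    qed
  next
    case False
    with P have p3: "v 3 p \<noteq> SZero \<and> g1 + dA \<le> g3 + sval (v 3 p)" by blast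
    show False
    proof (cases "v 1 r \<noteq> SZero \<and> g3 + dC \<le> g1 + sval (v 1 r)")
      case True
      show False
        by (rule contra2[OF conjunct2[OF p3] conjunct2[OF True] c13[OF conjunct1[OF p3] conjunct1[OF True]]])
          (simp add: algebra_simps)
    next
      case False
      with R have r2: "v 2 r \<noteq> SZero \<and> g3 + dC \<le> g2 + sval (v 2 r)" by blast
      show False
      proof (cases "v 1 q \<noteq> SZero \<and> g2 + dB \<le> g1 + sval (v 1 q)")
        case True
        show False
          by (rule contra3[OF conjunct2[OF p3] conjunct2[OF r2] conjunct2[OF True] c132[OF conjunct1[OF p3] conjunct1[OF r2] conjunct1[OF True]]])
            (simp add: algebra_simps)
      next
        case False
        with Q have q3: "v 3 q \<noteq> SZero \<and> g2 + dB \<le> g3 + sval (v 3 q)" by blast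
        show False
          by (rule contra2[OF conjunct2[OF q3] conjunct2[OF r2] c23[OF conjunct1[OF q3] conjunct1[OF r2]]])
            (simp add: algebra_simps)
      qed
    qed
  qed
qed

lemma indep2:
  fixes v :: "nat \<Rightarrow> nat \<Rightarrow> 'a::linordered_ab_group_add st"
  assumes pq: "p < 2" "q < 2"
  and d: "v 1 p = Tan dA" "v 2 q = Tan dB"
  and c12: "v 2 p \<noteq> SZero \<Longrightarrow> v 1 q \<noteq> SZero \<Longrightarrow> sval (v 2 p) + sval (v 1 q) < dA + dB"
  shows "st_independent 2 v 2"
  unfolding st_independent_def st_dependent_def
proof
  assume "\<exists>c. (\<forall>i\<in>{1..2}. tangible (c i)) \<and> (\<forall>j<2. ghost0 (\<Sum>i\<in>{1..2}. c i * v i j))"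
  then obtain c where ct: "\<forall>i\<in>{1..2}. tangible (c i)" and cg: "\<forall>j<2. ghost0 (\<Sum>i\<in>{1..2}. c i * v i j)" by blast
  have "tangible (c 1)" "tangible (c 2)" using ct by auto
  then obtain g1 g2 where g: "c 1 = Tan g1" "c 2 = Tan g2"
    by (auto simp: tangible_def)
  have rp: "ghost0 (c 1 * v 1 p + c 2 * v 2 p)" using cg pq(1) unfolding sum12 by blast
  have "ghost0 (c 1 * v 1 q + c 2 * v 2 q)" using cg pq(2) unfolding sum12 by blast
  then have rq: "ghost0 (c 2 * v 2 q + c 1 * v 1 q)" by (simp add: ac_simps)
  have P: "v 2 p \<noteq> SZero \<and> g1 + dA \<le> g2 + sval (v 2 p)"
    using dom2[OF rp] unfolding g d by (auto simp: tangible_def dest: tan_mult_nz simp: tan_mult_sval)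
  have Q: "v 1 q \<noteq> SZero \<and> g2 + dB \<le> g1 + sval (v 1 q)"
    using dom2[OF rq] unfolding g d by (auto simp: tangible_def dest: tan_mult_nz simp: tan_mult_sval)
  show False
    by (rule contra2[OF conjunct2[OF P] conjunct2[OF Q] c12[OF conjunct1[OF P] conjunct1[OF Q]]])
      (simp add: algebra_simps)
qed




lemma smono_ge: "strict_mono_on {0..n} f \<Longrightarrow> k + j \<le> n \<Longrightarrow> f k + j \<le> f (k + j)" for f :: "nat \<Rightarrow> nat"
proof (induction j)
  case 0 then show ?case by simp
next
  case (Suc j)
  then have "f k + j \<le> f (k + j)" by simp
  moreover have "f (k + j) < f (k + Suc j)"
    using Suc.prems by (intro strict_mono_onD[OF Suc.prems(1)]) auto
  ultimately show ?case by simp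
qed

lemma smono_id:
  fixes f :: "nat \<Rightarrow> nat"
  assumes "strict_mono_on {0..n} f" "f ` {0..n} \<subseteq> {0..n}" "k \<le> n"
  shows "f k = k"
proof -
  have "f 0 + k \<le> f k" using smono_ge[OF assms(1), of 0 k] assms(3) by simp
  moreover have "f k + (n - k) \<le> f n" using smono_ge[OF assms(1), of k "n - k"] assms(3) by simp
  moreover have "f n \<le> n" using assms(2) by (auto simp: image_subset_iff)
  ultimately show ?thesis using assms(3) by linarith
qed

lemma st_add_upper1: "(x::'a::linordered_ab_group_add st) \<noteq> SZero \<Longrightarrow> x + z \<noteq> SZero \<and> sval x \<le> sval (x + z)"
  by (cases x; cases z) (auto simp: plus_st_def)
lemma st_add_upper2: "(z::'a::linordered_ab_group_add st) \<noteq> SZero \<Longrightarrow> x + z \<noteq> SZero \<and> sval z \<le> sval (x + z)"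
  by (cases x; cases z) (auto simp: plus_st_def)

lemma sum_upper:
  fixes f :: "'b \<Rightarrow> 'a::linordered_ab_group_add st"
  assumes "finite F" "y \<in> F"
  shows "f y = SZero \<or> (sum f F \<noteq> SZero \<and> sval (f y) \<le> sval (sum f F))"
  using assms
proof (induction F rule: finite_induct)
  case empty then show ?case by simp
next
  case (insert a G)
  show ?case
  proof (cases "f y = SZero")
    case False
    show ?thesis
    proof (cases "y = a")
      case True
      then show ?thesis using st_add_upper1[OF False, of "sum f G"] insert by simp
    next
      case ya: False
      then have "y \<in> G" using insert by simp
      then have "sum f G \<noteq> SZero \<and> sval (f y) \<le> sval (sum f G)" using insert False by blast
      then show ?thesis using st_add_upper2[of "sum f G" "f a"] insert by (auto intro: order_trans)
    qed
  qed simp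
qed

lemma tangible_sum_dom:
  fixes f :: "'b \<Rightarrow> 'a::linordered_ab_group_add st"
  assumes "finite F" "tangible (sum f F)"
  shows "\<exists>x\<in>F. f x = sum f F \<and> (\<forall>y\<in>F. y \<noteq> x \<longrightarrow> f y = SZero \<or> sval (f y) < sval (f x))"
  using assms
proof (induction F rule: finite_induct)
  case empty then show ?case by (simp add: tangible_def zero_st_def)
next
  case (insert a G)
  let ?s = "sum f G"
  have tot: "tangible (f a + ?s)" using insert by simp
  show ?case
  proof (cases "?s = SZero")
    case True
    have z: "\<forall>y\<in>G. f y = SZero" using sum_upper[OF insert(1)] True by fastforce
    have "f a + ?s = f a" using True by (simp add: plus_st_def)
    then show ?thesis using insert z by (auto intro!: bexI[of _ a])
  next
    case sn: False
    show ?thesis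
    proof (cases "f a = SZero")
      case True
      then have e: "f a + ?s = ?s" by (simp add: plus_st_def)
      then have "tangible ?s" using tot by simp
      then obtain x where x: "x \<in> G" "f x = ?s" "\<forall>y\<in>G. y \<noteq> x \<longrightarrow> f y = SZero \<or> sval (f y) < sval (f x)"
        using insert by blast
      then show ?thesis using True e insert(1,2) by (auto intro!: bexI[of _ x])
    next
      case an: False
      consider "sval (f a) < sval ?s" | "sval ?s < sval (f a)" | "sval ?s = sval (f a)" by fastforce
      then show ?thesis
      proof cases
        case 1
        then have e: "f a + ?s = ?s" using an sn by (simp add: plus_st_def)
        then have "tangible ?s" using tot by simp
        then obtain x where x: "x \<in> G" "f x = ?s" "\<forall>y\<in>G. y \<noteq> x \<longrightarrow> f y = SZero \<or> sval (f y) < sval (f x)"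
          using insert by blast
        then show ?thesis using 1 e insert(1,2) by (auto intro!: bexI[of _ x])
      next
        case 2
        then have e: "f a + ?s = f a" using an sn using 2 by (simp add: plus_st_def zero_st_def)
        have "\<forall>y\<in>G. f y = SZero \<or> sval (f y) < sval (f a)"
          using sum_upper[OF insert(1)] 2 by (fastforce intro: le_less_trans)
        then show ?thesis using e insert(1,2) by (auto intro!: bexI[of _ a])
      next
        case 3
        then have "f a + ?s = Gh (sval ?s)" using an sn by (simp add: plus_st_def)
        then show ?thesis using tot by (simp add: tangible_def)
      qed
    qed
  qed
qed

definition TT :: "nat \<Rightarrow> nat \<Rightarrow> (nat set \<times> (nat \<Rightarrow> nat)) set" where
  "TT n k = Sigma {S. S \<subseteq> {..<n} \<and> card S = k} (\<lambda>S. {\<sigma>. \<sigma> permutes S})"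

lemma finite_TT: "finite (TT n k)"
proof -
  have f1: "finite {S. S \<subseteq> {..<n} \<and> card S = k}"
    by (rule finite_subset[of _ "Pow {..<n}"]) auto
  have "\<forall>S\<in>{S. S \<subseteq> {..<n} \<and> card S = k}. finite {\<sigma>. \<sigma> permutes S}"
    by (auto intro: finite_permutations finite_subset[of _ "{..<n}"])
  then show ?thesis unfolding TT_def using f1 by auto
qed

lemma char_coeff_TT: "char_coeff A n k = (\<Sum>(S,\<sigma>)\<in>TT n k. \<Prod>i\<in>S. A i (\<sigma> i))"
proof -
  have f1: "finite {S. S \<subseteq> {..<n} \<and> card S = k}"
    by (rule finite_subset[of _ "Pow {..<n}"]) auto
  have "\<forall>S\<in>{S. S \<subseteq> {..<n} \<and> card S = k}. finite {\<sigma>. \<sigma> permutes S}"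
    by (auto intro: finite_permutations finite_subset[of _ "{..<n}"])
  then show ?thesis unfolding char_coeff_def pdet_def TT_def
    by (rule sum.Sigma[OF f1])
qed

lemma term_le:
  fixes A :: "'a::linordered_ab_group_add smat"
  assumes "S \<subseteq> {..<n}" "card S = k" "\<sigma> permutes S"
  shows "(\<Prod>i\<in>S. A i (\<sigma> i)) = SZero \<or> (char_coeff A n k \<noteq> SZero \<and> sval (\<Prod>i\<in>S. A i (\<sigma> i)) \<le> sval (char_coeff A n k))"
proof -
  have "(S, \<sigma>) \<in> TT n k" using assms by (simp add: TT_def)
  from sum_upper[where f="\<lambda>(S,\<sigma>). \<Prod>i\<in>S. A i (\<sigma> i)", OF finite_TT this]
  show ?thesis unfolding char_coeff_TT by simp
qed

lemma dom_char:
  fixes A :: "'a::linordered_ab_group_add smat"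
  assumes "tangible (char_coeff A n k)"
  obtains S0 \<sigma>0 where "S0 \<subseteq> {..<n}" "card S0 = k" "\<sigma>0 permutes S0"
    "(\<Prod>i\<in>S0. A i (\<sigma>0 i)) = char_coeff A n k" "Ind A n k = S0"
    "\<And>S \<sigma>. S \<subseteq> {..<n} \<Longrightarrow> card S = k \<Longrightarrow> \<sigma> permutes S \<Longrightarrow> (S, \<sigma>) \<noteq> (S0, \<sigma>0) \<Longrightarrow>
       (\<Prod>i\<in>S. A i (\<sigma> i)) = SZero \<or> sval (\<Prod>i\<in>S. A i (\<sigma> i)) < sval (char_coeff A n k)"
proof -
  let ?g = "\<lambda>(S,\<sigma>). \<Prod>i\<in>S. A i (\<sigma> i)"
  from tangible_sum_dom[where f="?g", OF finite_TT] assms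
  obtain x where x: "x \<in> TT n k" "?g x = char_coeff A n k"
    "\<forall>y\<in>TT n k. y \<noteq> x \<longrightarrow> ?g y = SZero \<or> sval (?g y) < sval (?g x)"
    unfolding char_coeff_TT by blast
  obtain S0 \<sigma>0 where x0: "x = (S0, \<sigma>0)" by (cases x)
  have m: "S0 \<subseteq> {..<n}" "card S0 = k" "\<sigma>0 permutes S0" using x(1) x0 by (auto simp: TT_def)
  have e: "(\<Prod>i\<in>S0. A i (\<sigma>0 i)) = char_coeff A n k" using x(2) x0 by simp
  have oth: "\<And>S \<sigma>. S \<subseteq> {..<n} \<Longrightarrow> card S = k \<Longrightarrow> \<sigma> permutes S \<Longrightarrow> (S, \<sigma>) \<noteq> (S0, \<sigma>0) \<Longrightarrow>
       (\<Prod>i\<in>S. A i (\<sigma> i)) = SZero \<or> sval (\<Prod>i\<in>S. A i (\<sigma> i)) < sval (char_coeff A n k)"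
  proof -
    fix S \<sigma> assume "S \<subseteq> {..<n}" "card S = k" "\<sigma> permutes S" "(S, \<sigma>) \<noteq> (S0, \<sigma>0)"
    then have "(S, \<sigma>) \<in> TT n k" by (simp add: TT_def)
    then show "(\<Prod>i\<in>S. A i (\<sigma> i)) = SZero \<or> sval (\<Prod>i\<in>S. A i (\<sigma> i)) < sval (char_coeff A n k)"
      using x(3) x0 e \<open>(S, \<sigma>) \<noteq> (S0, \<sigma>0)\<close> by auto
  qed
  have nz: "char_coeff A n k \<noteq> SZero" using assms by (auto simp: tangible_def)
  have "Ind A n k = S0"
    unfolding Ind_def
  proof (rule the_equality)
    show "S0 \<subseteq> {..<n} \<and> card S0 = k \<and> (\<exists>\<sigma>. \<sigma> permutes S0 \<and> (\<Prod>i\<in>S0. A i (\<sigma> i)) = char_coeff A n k)"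
      using m e by blast
  next
    fix S assume "S \<subseteq> {..<n} \<and> card S = k \<and> (\<exists>\<sigma>. \<sigma> permutes S \<and> (\<Prod>i\<in>S. A i (\<sigma> i)) = char_coeff A n k)"
    then obtain \<sigma> where s: "S \<subseteq> {..<n}" "card S = k" "\<sigma> permutes S" "(\<Prod>i\<in>S. A i (\<sigma> i)) = char_coeff A n k" by blast
    show "S = S0"
    proof (rule ccontr)
      assume "S \<noteq> S0"
      then have "(S, \<sigma>) \<noteq> (S0, \<sigma>0)" by simp
      from oth[OF s(1-3) this] s(4) nz show False by simp
    qed
  qed
  then show ?thesis using that m e oth by blast
qed

lemma pdet_doubleton: "a \<noteq> b \<Longrightarrow> pdet (M::'a::linordered_ab_group_add smat) {a, b} = M a a * M b b + M a b * M b a"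
proof -
  assume ab: "a \<noteq> b"
  have "{\<sigma>. \<sigma> permutes {a, b}} = {id, Transposition.transpose a b}"
    by (auto simp: permutes_doubleton_iff)
  moreover have "id \<noteq> Transposition.transpose a b"
    using ab by (metis id_apply transpose_apply_first)
  ultimately show ?thesis using ab unfolding pdet_def by (simp add: mult.commute)
qed

lemma pdet_sing: "pdet (M::'a::linordered_ab_group_add smat) {a} = M a a"
proof -
  have "{\<sigma>. \<sigma> permutes {a}} = {id}" by auto
  then show ?thesis unfolding pdet_def by simp
qed

lemma per2_sym:
  fixes B :: "'a::linordered_ab_group_add smat"
  assumes "{a, b} = {a', b'}" "{c, d} = {c', d'}" "a \<noteq> b" "c \<noteq> d"
  shows "B a c * B b d + B a d * B b c = B a' c' * B b' d' + B a' d' * B b' c'"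
  using assms by (auto simp: doubleton_eq_iff ac_simps)

lemma skip_pair: "t < 3 \<Longrightarrow> a < 3 \<Longrightarrow> b < 3 \<Longrightarrow> a \<noteq> b \<Longrightarrow> a \<noteq> t \<Longrightarrow> b \<noteq> t \<Longrightarrow> {skip t 0, skip t 1} = {a, b}"
  unfolding skip_def by (auto simp: doubleton_eq_iff)

lemma sadj3:
  fixes B :: "'a::linordered_ab_group_add smat"
  assumes "a < 3" "b < 3" "t < 3" "a \<noteq> b" "a \<noteq> t" "b \<noteq> t" "c < 3" "d < 3" "j < 3" "c \<noteq> d" "c \<noteq> j" "d \<noteq> j"
  shows "sadj B 3 j t = B a c * B b d + B a d * B b c"
proof -
  have "{..<2::nat} = {0, 1}" by auto
  then have "sadj B 3 j t = B (skip t 0) (skip j 0) * B (skip t 1) (skip j 1) + B (skip t 0) (skip j 1) * B (skip t 1) (skip j 0)"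
    unfolding sadj_def sdet_def by (simp add: pdet_doubleton minor_def)
  also have "\<dots> = B a c * B b d + B a d * B b c"
    by (rule per2_sym) (use assms skip_pair[of t a b] skip_pair[of j c d] in \<open>auto simp: skip_def\<close>)
  finally show ?thesis .
qed

lemma sadj2:
  fixes B :: "'a::linordered_ab_group_add smat"
  assumes "a < 2" "t < 2" "a \<noteq> t" "c < 2" "j < 2" "c \<noteq> j"
  shows "sadj B 2 j t = B a c"
proof -
  have "{..<1::nat} = {0}" by auto
  then have "sadj B 2 j t = B (skip t 0) (skip j 0)"
    unfolding sadj_def sdet_def by (simp add: pdet_sing minor_def)
  also have "\<dots> = B a c"
  proof -
    have "a = skip t 0" "c = skip j 0" using assms by (auto simp: skip_def)
    then show ?thesis by simp
  qed
  finally show ?thesis .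
qed

lemma char_coeff0: "char_coeff (A::'a::linordered_ab_group_add smat) n 0 = Tan 0"
proof -
  have "{S. S \<subseteq> {..<n} \<and> card S = 0} = {{}}"
    by (auto, metis card_0_eq finite_lessThan finite_subset empty_iff)
  then show ?thesis unfolding char_coeff_def pdet_def by (simp add: one_st_def)
qed




lemma tpow: "Tan (x::'a::linordered_ab_group_add) ^ 0 = Tan 0" "Tan x ^ 1 = Tan x" "Tan x ^ 2 = Tan (x + x)" "Tan x ^ 3 = Tan (x + x + x)"
  by (simp_all add: eval_nat_numeral one_st_def add.assoc)

lemma nu_less_tan: "nu_less (Tan (x::'a::linordered_ab_group_add)) (Tan y) \<longleftrightarrow> x < y"
  by (simp add: nu_less_def)

lemma contra0:
  fixes x :: "'a::linordered_ab_group_add"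
  assumes "x \<le> y" "u < v" "s < w" "(y + v + w) - (x + u + s) = 0" shows False
proof -
  have "x + u + s < y + v + w" using add_strict_mono[OF add_le_less_mono[OF assms(1,2)] assms(3)] .
  then have "0 < (y + v + w) - (x + u + s)" by simp
  then show False using assms(4) by simp
qed

lemma main3:
  fixes A :: "'a::linordered_ab_group_add smat"
    and ii :: "nat \<Rightarrow> nat"
    and lam :: "nat \<Rightarrow> 'a st"
    and t :: "nat \<Rightarrow> nat"
    and v :: "nat \<Rightarrow> nat \<Rightarrow> 'a st"
  assumes coeffs_tangible: "\<forall>k\<le>3. tangible (char_coeff A 3 k)"
    and ii_mono: "strict_mono_on {0..3} ii"
    and ii_ess: "{k. essential A 3 k} = ii ` {0..3}"
    and lam_corner: "\<forall>k\<in>{1..3}. tangible (lam k) \<and>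
        char_coeff A 3 (ii (k - 1)) * lam k ^ (3 - ii (k - 1)) =
        char_coeff A 3 (ii k) * lam k ^ (3 - ii k)"
    and t_choice: "\<forall>k\<in>{1..3}. t k \<in> Ind A 3 (ii k) - Ind A 3 (ii (k - 1))"
    and v_def: "\<forall>k\<in>{1..3}. \<forall>j<3. v k j = hat (sadj (add_diag A (lam k)) 3 j (t k))"
  shows "st_independent 3 v 3"
proof -
  have sub: "ii ` {0..3} \<subseteq> {0..3}" using ii_ess by (auto simp: essential_def)
  have ii: "ii 0 = 0" "ii 1 = 1" "ii 2 = 2" "ii 3 = 3"
    using smono_id[OF ii_mono sub] by auto
  have ii': "ii (Suc 0) = Suc 0" using ii(2) by simp
  have "1 \<in> ii ` {0..3}" by (rule image_eqI[of _ _ 1], rule ii(2)[symmetric], simp)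
  moreover have "2 \<in> ii ` {0..3}" by (rule image_eqI[of _ _ 2], rule ii(3)[symmetric], simp)
  ultimately have ess: "essential A 3 1" "essential A 3 2" using ii_ess by auto
  have "tangible (char_coeff A 3 1)" "tangible (char_coeff A 3 2)" "tangible (char_coeff A 3 3)"
    using coeffs_tangible by auto
  then obtain a1 a2 a3 where al: "char_coeff A 3 1 = Tan a1" "char_coeff A 3 2 = Tan a2" "char_coeff A 3 3 = Tan a3"
    by (auto simp: tangible_def)
  have al0: "char_coeff A 3 0 = Tan 0" by (rule char_coeff0)
  have conc1: "a2 < a1 + a1"
  proof -
    obtain x where x: "tangible x" "\<forall>j\<le>3. j \<noteq> 1 \<longrightarrow> nu_less (char_coeff A 3 j * x ^ (3 - j)) (char_coeff A 3 1 * x ^ (3 - 1))"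
      using ess(1) unfolding essential_def by blast
    obtain y where y: "x = Tan y" using x(1) by (auto simp: tangible_def)
    have h0: "nu_less (char_coeff A 3 0 * x ^ 3) (char_coeff A 3 1 * x ^ 2)" using x(2)[rule_format, of 0] by simp
    have h2: "nu_less (char_coeff A 3 2 * x ^ 1) (char_coeff A 3 1 * x ^ 2)" using x(2)[rule_format, of 2] by simp
    have "y < a1" using h0 unfolding al al0 y tpow by (simp add: nu_less_tan algebra_simps)
    moreover have "a2 < a1 + y" using h2 unfolding al al0 y tpow by (simp add: nu_less_tan algebra_simps)
    ultimately show ?thesis by (meson add_strict_left_mono less_trans)
  qed
  have conc2: "a1 + a3 < a2 + a2"
  proof -
    obtain x where x: "tangible x" "\<forall>j\<le>3. j \<noteq> 2 \<longrightarrow> nu_less (char_coeff A 3 j * x ^ (3 - j)) (char_coeff A 3 2 * x ^ (3 - 2))"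
      using ess(2) unfolding essential_def by blast
    obtain y where y: "x = Tan y" using x(1) by (auto simp: tangible_def)
    have h1: "nu_less (char_coeff A 3 1 * x ^ 2) (char_coeff A 3 2 * x ^ 1)" using x(2)[rule_format, of 1] by simp
    have h3: "nu_less (char_coeff A 3 3 * x ^ 0) (char_coeff A 3 2 * x ^ 1)" using x(2)[rule_format, of 3] by simp
    have "a1 + y < a2" using h1 unfolding al al0 y tpow by (simp add: nu_less_tan algebra_simps)
    moreover have "a3 < a2 + y" using h3 unfolding al al0 y tpow by (simp add: nu_less_tan algebra_simps)
    ultimately have "a1 + a3 < (a2 - y) + (a2 + y)" by (metis add_strict_mono less_diff_eq)
    then show ?thesis by (simp add: algebra_simps)
  qed
  have lam: "lam 1 = Tan a1" "lam 2 = Tan (a2 - a1)" "lam 3 = Tan (a3 - a2)"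
  proof -
    have "tangible (lam 1)" "tangible (lam 2)" "tangible (lam 3)" using lam_corner by auto
    then obtain l1 l2 l3 where l: "lam 1 = Tan l1" "lam 2 = Tan l2" "lam 3 = Tan l3" by (auto simp: tangible_def)
    have e1: "char_coeff A 3 0 * lam 1 ^ 3 = char_coeff A 3 1 * lam 1 ^ 2" using lam_corner[rule_format, of 1] ii ii' by simp
    have e2: "char_coeff A 3 1 * lam 2 ^ 2 = char_coeff A 3 2 * lam 2 ^ 1" using lam_corner[rule_format, of 2] ii ii' by simp
    have e3: "char_coeff A 3 2 * lam 3 ^ 1 = char_coeff A 3 3 * lam 3 ^ 0" using lam_corner[rule_format, of 3] ii ii' by simp
    have "l1 = a1" using e1 unfolding l al al0 tpow by (simp add: algebra_simps)
    moreover have "l2 = a2 - a1" using e2 unfolding l al al0 tpow by (simp add: algebra_simps)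
    moreover have "l3 = a3 - a2" using e3 unfolding l al al0 tpow by (simp add: algebra_simps)
    ultimately show "lam 1 = Tan a1" "lam 2 = Tan (a2 - a1)" "lam 3 = Tan (a3 - a2)" using l by auto
  qed
  have tc: "t 1 \<in> Ind A 3 1" "t 2 \<in> Ind A 3 2" "t 2 \<notin> Ind A 3 1" "t 3 \<in> Ind A 3 3" "t 3 \<notin> Ind A 3 2"
    using t_choice[rule_format, of 1] t_choice[rule_format, of 2] t_choice[rule_format, of 3] ii ii' by simp_all
  have tg: "tangible (char_coeff A 3 1)" "tangible (char_coeff A 3 2)" "tangible (char_coeff A 3 3)"
    using al by (simp_all add: tangible_def)
  obtain S1 \<sigma>1 where d1: "S1 \<subseteq> {..<3}" "card S1 = 1" "\<sigma>1 permutes S1"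
    "(\<Prod>i\<in>S1. A i (\<sigma>1 i)) = char_coeff A 3 1" "Ind A 3 1 = S1"
    and o1: "\<And>S \<sigma>. S \<subseteq> {..<3} \<Longrightarrow> card S = 1 \<Longrightarrow> \<sigma> permutes S \<Longrightarrow> (S, \<sigma>) \<noteq> (S1, \<sigma>1) \<Longrightarrow>
       (\<Prod>i\<in>S. A i (\<sigma> i)) = SZero \<or> sval (\<Prod>i\<in>S. A i (\<sigma> i)) < sval (char_coeff A 3 1)"
    by (rule dom_char[OF tg(1)]) blast
  obtain S2 \<sigma>2 where d2: "S2 \<subseteq> {..<3}" "card S2 = 2" "\<sigma>2 permutes S2"
    "(\<Prod>i\<in>S2. A i (\<sigma>2 i)) = char_coeff A 3 2" "Ind A 3 2 = S2"
    and o2: "\<And>S \<sigma>. S \<subseteq> {..<3} \<Longrightarrow> card S = 2 \<Longrightarrow> \<sigma> permutes S \<Longrightarrow> (S, \<sigma>) \<noteq> (S2, \<sigma>2) \<Longrightarrow>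
       (\<Prod>i\<in>S. A i (\<sigma> i)) = SZero \<or> sval (\<Prod>i\<in>S. A i (\<sigma> i)) < sval (char_coeff A 3 2)"
    by (rule dom_char[OF tg(2)]) blast
  obtain S3 \<sigma>3 where d3: "S3 \<subseteq> {..<3}" "card S3 = 3" "\<sigma>3 permutes S3"
    "(\<Prod>i\<in>S3. A i (\<sigma>3 i)) = char_coeff A 3 3" "Ind A 3 3 = S3"
    by (rule dom_char[OF tg(3)]) blast
  define p where "p = t 1"
  define q where "q = t 2"
  define r where "r = t 3"
  have tpqr: "t 1 = p" "t 2 = q" "t 3 = r" by (simp_all add: p_def q_def r_def)
  obtain x1 where "S1 = {x1}" using d1(2) by (rule card_1_singletonE)
  then have S1: "S1 = {p}" using tc(1) d1(5) tpqr by simp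
  have p3: "p < 3" using d1(1) S1 by auto
  have \<sigma>1: "\<sigma>1 = id" using d1(3) S1 by simp
  have App: "A p p = Tan a1" using d1(4) S1 \<sigma>1 al by simp
  have qS2: "q \<in> S2" and qp: "q \<noteq> p" using tc(2,3) d1(5) d2(5) S1 tpqr by auto
  have finS2: "finite S2" using d2(1) finite_subset by blast
  have pS2: "p \<in> S2"
  proof (rule ccontr)
    assume pn: "p \<notin> S2"
    have ins: "insert p S2 = {..<3}"
      by (rule card_subset_eq) (use d2(1) p3 pn finS2 d2(2) in auto)
    have perm: "\<sigma>2 permutes insert p S2" by (rule permutes_subset[OF d2(3)]) auto
    have "(\<Prod>i\<in>insert p S2. A i (\<sigma>2 i)) = A p p * Tan a2"
      using prod.insert[OF finS2 pn, of "\<lambda>i. A i (\<sigma>2 i)"] permutes_not_in[OF d2(3) pn] d2(4) al by simp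
    moreover have "card (insert p S2) = 3" using ins by simp
    ultimately have "A p p * Tan a2 = SZero \<or> (char_coeff A 3 3 \<noteq> SZero \<and> sval (A p p * Tan a2) \<le> sval (char_coeff A 3 3))"
      using term_le[of "insert p S2" 3 3 \<sigma>2 A] ins perm by simp
    then have "a1 + a2 \<le> a3" using App al by simp
    then show False
      by (rule contra0[OF _ conc2 conc1]) (simp add: algebra_simps)
  qed
  have S2: "S2 = {p, q}"
    by (rule card_subset_eq[symmetric]) (use finS2 pS2 qS2 d2(2) qp in auto)
  have S3: "S3 = {..<3}"
    by (rule card_subset_eq) (use d3(1,2) in auto)
  have r3: "r < 3" and rp: "r \<noteq> p" and rq: "r \<noteq> q" using tc(4,5) d3(5) S3 d2(5) S2 tpqr by auto
  have q3: "q < 3" using d2(1) qS2 by auto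
  have pqr: "p < 3" "q < 3" "r < 3" "p \<noteq> q" "p \<noteq> r" "q \<noteq> r" "q \<noteq> p" "r \<noteq> p" "r \<noteq> q"
    using p3 q3 r3 qp rp rq by auto
  have set3: "{p, q, r} \<subseteq> {..<3}" "card {p, q, r} = 3" using pqr by auto
  have hqq: "A q q \<noteq> SZero \<Longrightarrow> sval (A q q) < a1"
    using o1[of "{q}" id] pqr S1 \<sigma>1 al by auto
  have hrr: "A r r \<noteq> SZero \<Longrightarrow> sval (A r r) < a1"
    using o1[of "{r}" id] pqr S1 \<sigma>1 al by auto
  have two: "\<And>a b. a < 3 \<Longrightarrow> b < 3 \<Longrightarrow> a \<noteq> b \<Longrightarrow> {a, b} \<noteq> S2 \<Longrightarrow>
     (A a a * A b b = SZero \<or> sval (A a a * A b b) < a2) \<and> (A a b * A b a = SZero \<or> sval (A a b * A b a) < a2)"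
  proof -
    fix a b :: nat assume ab: "a < 3" "b < 3" "a \<noteq> b" "{a, b} \<noteq> S2"
    have c: "{a, b} \<subseteq> {..<3}" "card {a, b} = 2" using ab by auto
    have 1: "(\<Prod>i\<in>{a, b}. A i (id i)) = SZero \<or> sval (\<Prod>i\<in>{a, b}. A i (id i)) < sval (char_coeff A 3 2)"
      by (rule o2[OF c permutes_id]) (use ab(4) in simp)
    have 2: "(\<Prod>i\<in>{a, b}. A i (Transposition.transpose a b i)) = SZero \<or> sval (\<Prod>i\<in>{a, b}. A i (Transposition.transpose a b i)) < sval (char_coeff A 3 2)"
      by (rule o2[OF c permutes_swap_id]) (use ab(4) in simp_all)
    show "(A a a * A b b = SZero \<or> sval (A a a * A b b) < a2) \<and> (A a b * A b a = SZero \<or> sval (A a b * A b a) < a2)"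
      using 1 2 ab al by simp
  qed
  have Spr: "{p, r} \<noteq> S2" "{q, r} \<noteq> S2" using S2 pqr by auto
  have t_pr: "A p p * A r r = SZero \<or> sval (A p p * A r r) < a2" "A p r * A r p = SZero \<or> sval (A p r * A r p) < a2"
    using two[OF pqr(1,3,5) Spr(1)] by auto
  have t_qr: "A q q * A r r = SZero \<or> sval (A q q * A r r) < a2" "A q r * A r q = SZero \<or> sval (A q r * A r q) < a2"
    using two[OF pqr(2,3,6) Spr(2)] by auto
  have h_pprr: "A r r \<noteq> SZero \<Longrightarrow> sval (A p p) + sval (A r r) < a2"
    using t_pr(1) App by (auto simp: st_mult_zero_iff st_sval_mult)
  have h_prrp: "A p r \<noteq> SZero \<Longrightarrow> A r p \<noteq> SZero \<Longrightarrow> sval (A p r) + sval (A r p) < a2"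
    using t_pr(2) by (auto simp: st_mult_zero_iff st_sval_mult)
  have h_qqrr: "A q q \<noteq> SZero \<Longrightarrow> A r r \<noteq> SZero \<Longrightarrow> sval (A q q) + sval (A r r) < a2"
    using t_qr(1) by (auto simp: st_mult_zero_iff st_sval_mult)
  have h_qrrq: "A q r \<noteq> SZero \<Longrightarrow> A r q \<noteq> SZero \<Longrightarrow> sval (A q r) + sval (A r q) < a2"
    using t_qr(2) by (auto simp: st_mult_zero_iff st_sval_mult)
  have three: "\<And>\<sigma>. \<sigma> permutes {p, q, r} \<Longrightarrow> (\<Prod>i\<in>{p, q, r}. A i (\<sigma> i)) = SZero \<or> sval (\<Prod>i\<in>{p, q, r}. A i (\<sigma> i)) \<le> a3"
  proof -
    fix \<sigma> assume "\<sigma> permutes {p, q, r}"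
    from term_le[OF set3 this, of A] show "(\<Prod>i\<in>{p, q, r}. A i (\<sigma> i)) = SZero \<or> sval (\<Prod>i\<in>{p, q, r}. A i (\<sigma> i)) \<le> a3"
      using al by auto
  qed
  have pin: "p \<in> {p, q, r}" "q \<in> {p, q, r}" "r \<in> {p, q, r}" by auto
  have T1: "(\<Prod>i\<in>{p, q, r}. A i (id i)) = SZero \<or> sval (\<Prod>i\<in>{p, q, r}. A i (id i)) \<le> a3"
    by (rule three[OF permutes_id])
  have T2: "(\<Prod>i\<in>{p, q, r}. A i (Transposition.transpose q r i)) = SZero \<or> sval (\<Prod>i\<in>{p, q, r}. A i (Transposition.transpose q r i)) \<le> a3"
    by (rule three, rule permutes_swap_id) simp_all
  have T3: "(\<Prod>i\<in>{p, q, r}. A i (Transposition.transpose p q i)) = SZero \<or> sval (\<Prod>i\<in>{p, q, r}. A i (Transposition.transpose p q i)) \<le> a3"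
    by (rule three, rule permutes_swap_id) simp_all
  have T4: "(\<Prod>i\<in>{p, q, r}. A i (Transposition.transpose p r i)) = SZero \<or> sval (\<Prod>i\<in>{p, q, r}. A i (Transposition.transpose p r i)) \<le> a3"
    by (rule three, rule permutes_swap_id) simp_all
  have T5: "(\<Prod>i\<in>{p, q, r}. A i ((Transposition.transpose p q \<circ> Transposition.transpose q r) i)) = SZero \<or> sval (\<Prod>i\<in>{p, q, r}. A i ((Transposition.transpose p q \<circ> Transposition.transpose q r) i)) \<le> a3"
    by (rule three, rule permutes_compose; rule permutes_swap_id) simp_all
  have T6: "(\<Prod>i\<in>{p, q, r}. A i ((Transposition.transpose p r \<circ> Transposition.transpose r q) i)) = SZero \<or> sval (\<Prod>i\<in>{p, q, r}. A i ((Transposition.transpose p r \<circ> Transposition.transpose r q) i)) \<le> a3"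
    by (rule three, rule permutes_compose; rule permutes_swap_id) simp_all
  have h3_ppqqrr: "A q q \<noteq> SZero \<Longrightarrow> A r r \<noteq> SZero \<Longrightarrow> sval (A p p) + sval (A q q) + sval (A r r) \<le> a3"
    using T1 pqr App by (auto simp: st_mult_zero_iff st_sval_mult ac_simps)
  have h3_ppqrrq: "A q r \<noteq> SZero \<Longrightarrow> A r q \<noteq> SZero \<Longrightarrow> sval (A p p) + sval (A q r) + sval (A r q) \<le> a3"
    using T2 pqr App by (auto simp: st_mult_zero_iff st_sval_mult ac_simps)
  have h3_pqqprr: "A p q \<noteq> SZero \<Longrightarrow> A q p \<noteq> SZero \<Longrightarrow> A r r \<noteq> SZero \<Longrightarrow> sval (A p q) + sval (A q p) + sval (A r r) \<le> a3"
    using T3 pqr by (auto simp: st_mult_zero_iff st_sval_mult ac_simps)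
  have h3_prrpqq: "A p r \<noteq> SZero \<Longrightarrow> A r p \<noteq> SZero \<Longrightarrow> A q q \<noteq> SZero \<Longrightarrow> sval (A p r) + sval (A r p) + sval (A q q) \<le> a3"
    using T4 pqr by (auto simp: st_mult_zero_iff st_sval_mult ac_simps)
  have h3_pqqrrp: "A p q \<noteq> SZero \<Longrightarrow> A q r \<noteq> SZero \<Longrightarrow> A r p \<noteq> SZero \<Longrightarrow> sval (A p q) + sval (A q r) + sval (A r p) \<le> a3"
    using T5 pqr by (auto simp: st_mult_zero_iff st_sval_mult ac_simps)
  have h3_prrqqp: "A p r \<noteq> SZero \<Longrightarrow> A r q \<noteq> SZero \<Longrightarrow> A q p \<noteq> SZero \<Longrightarrow> sval (A p r) + sval (A r q) + sval (A q p) \<le> a3"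
    using T6 pqr by (auto simp: st_mult_zero_iff st_sval_mult ac_simps)
  have hpp_nz: "A p p \<noteq> SZero" and hpp: "sval (A p p) = a1" using App by simp_all
  have V1p: "v 1 p = hat (((A q q) + Tan a1) * ((A r r) + Tan a1) + (A q r) * (A r q))"
    using v_def[rule_format, of 1 p] sadj3[of q r p q r p "add_diag A (lam 1)"] pqr lam tpqr
    by (simp add: add_diag_def)
  have V1q: "v 1 q = hat ((A q p) * ((A r r) + Tan a1) + (A q r) * (A r p))"
    using v_def[rule_format, of 1 q] sadj3[of q r p p r q "add_diag A (lam 1)"] pqr lam tpqr
    by (simp add: add_diag_def)
  have V1r: "v 1 r = hat ((A q p) * (A r q) + ((A q q) + Tan a1) * (A r p))"
    using v_def[rule_format, of 1 r] sadj3[of q r p p q r "add_diag A (lam 1)"] pqr lam tpqr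
    by (simp add: add_diag_def)
  have V2p: "v 2 p = hat ((A p q) * ((A r r) + Tan (a2 - a1)) + (A p r) * (A r q))"
    using v_def[rule_format, of 2 p] sadj3[of p r q q r p "add_diag A (lam 2)"] pqr lam tpqr
    by (simp add: add_diag_def)
  have V2q: "v 2 q = hat (((A p p) + Tan (a2 - a1)) * ((A r r) + Tan (a2 - a1)) + (A p r) * (A r p))"
    using v_def[rule_format, of 2 q] sadj3[of p r q p r q "add_diag A (lam 2)"] pqr lam tpqr
    by (simp add: add_diag_def)
  have V2r: "v 2 r = hat (((A p p) + Tan (a2 - a1)) * (A r q) + (A p q) * (A r p))"
    using v_def[rule_format, of 2 r] sadj3[of p r q p q r "add_diag A (lam 2)"] pqr lam tpqr
    by (simp add: add_diag_def)
  have V3p: "v 3 p = hat ((A p q) * (A q r) + (A p r) * ((A q q) + Tan (a3 - a2)))"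
    using v_def[rule_format, of 3 p] sadj3[of p q r q r p "add_diag A (lam 3)"] pqr lam tpqr
    by (simp add: add_diag_def)
  have V3q: "v 3 q = hat (((A p p) + Tan (a3 - a2)) * (A q r) + (A p r) * (A q p))"
    using v_def[rule_format, of 3 q] sadj3[of p q r p r q "add_diag A (lam 3)"] pqr lam tpqr
    by (simp add: add_diag_def)
  have V3r: "v 3 r = hat (((A p p) + Tan (a3 - a2)) * ((A q q) + Tan (a3 - a2)) + (A p q) * (A q p))"
    using v_def[rule_format, of 3 r] sadj3[of p q r p q r "add_diag A (lam 3)"] pqr lam tpqr
    by (simp add: add_diag_def)

  have \<sigma>2c: "\<sigma>2 = id \<or> \<sigma>2 = Transposition.transpose p q" using d2(3) S2 by (simp add: permutes_doubleton_iff)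
  have tr_ne: "Transposition.transpose p q \<noteq> id" using pqr by (metis id_apply transpose_apply_first)
  have cS2: "{p, q} \<subseteq> {..<3}" "card {p, q} = 2" using pqr by auto
  show ?thesis
  proof (cases "\<sigma>2 = id")
    case True
    have e: "A p p * A q q = Tan a2" using d2(4) S2 True al pqr by simp
    have o: "(\<Prod>i\<in>{p, q}. A i (Transposition.transpose p q i)) = SZero \<or> sval (\<Prod>i\<in>{p, q}. A i (Transposition.transpose p q i)) < sval (char_coeff A 3 2)"
      by (rule o2[OF cS2]) (use pqr S2 True tr_ne in \<open>auto intro: permutes_swap_id\<close>)
    have hqq_nz: "A q q \<noteq> SZero" using e by (auto simp: st_mult_zero_iff)
    have hqq_eq: "sval (A q q) = a2 - a1"
    proof -
      have "sval (A p p * A q q) = a2" using e by simp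
      then have "a1 + sval (A q q) = a2" using hpp_nz hqq_nz hpp by (simp add: st_sval_mult)
      then show ?thesis by (simp add: eq_diff_eq add.commute)
    qed
    have h_pqqp: "A p q \<noteq> SZero \<Longrightarrow> A q p \<noteq> SZero \<Longrightarrow> sval (A p q) + sval (A q p) < a2"
      using o pqr al by (auto simp: st_mult_zero_iff st_sval_mult)
    interpret c: core0 "A p p" "A p q" "A p r" "A q p" "A q q" "A q r" "A r p" "A r q" "A r r" a1 a2 a3
      by unfold_locales (fact hpp_nz hpp hqq hrr h_pprr h_prrp h_qqrr h_qrrq h3_ppqqrr h3_ppqrrq h3_pqqprr h3_prrpqq h3_pqqrrp h3_prrqqp conc1 conc2 hqq_nz hqq_eq h_pqqp)+
    show ?thesis
    proof (rule indep3[where dA="a1 + a1" and dB=a2 and dC=a2, OF pqr(1,2,3)])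
      show "v 1 p = Tan (a1 + a1)" unfolding V1p by (rule c.diag1)
      show "v 2 q = Tan a2" unfolding V2q by (rule c.diag2)
      show "v 3 r = Tan a2" unfolding V3r by (rule c.diag3)
      show "v 2 p \<noteq> SZero \<Longrightarrow> v 1 q \<noteq> SZero \<Longrightarrow> sval (v 2 p) + sval (v 1 q) < a1 + a1 + a2"
        unfolding V2p V1q by (rule c.cyc0)
      show "v 3 p \<noteq> SZero \<Longrightarrow> v 1 r \<noteq> SZero \<Longrightarrow> sval (v 3 p) + sval (v 1 r) < a1 + a1 + a2"
        unfolding V3p V1r by (rule c.cyc1)
      show "v 3 q \<noteq> SZero \<Longrightarrow> v 2 r \<noteq> SZero \<Longrightarrow> sval (v 3 q) + sval (v 2 r) < a2 + a2"
        unfolding V3q V2r by (rule c.cyc2)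
      show "v 2 p \<noteq> SZero \<Longrightarrow> v 3 q \<noteq> SZero \<Longrightarrow> v 1 r \<noteq> SZero \<Longrightarrow> sval (v 2 p) + sval (v 3 q) + sval (v 1 r) < a1 + a1 + a2 + a2"
        unfolding V2p V3q V1r by (rule c.cyc3)
      show "v 3 p \<noteq> SZero \<Longrightarrow> v 2 r \<noteq> SZero \<Longrightarrow> v 1 q \<noteq> SZero \<Longrightarrow> sval (v 3 p) + sval (v 2 r) + sval (v 1 q) < a1 + a1 + a2 + a2"
        unfolding V3p V2r V1q by (rule c.cyc4)
    qed
  next
    case False
    then have s2: "\<sigma>2 = Transposition.transpose p q" using \<sigma>2c by blast
    have e: "A p q * A q p = Tan a2" using d2(4) S2 s2 al pqr by simp
    have o: "(\<Prod>i\<in>{p, q}. A i (id i)) = SZero \<or> sval (\<Prod>i\<in>{p, q}. A i (id i)) < sval (char_coeff A 3 2)"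
      by (rule o2[OF cS2 permutes_id]) (use pqr S2 False in auto)
    have hpq_nz: "A p q \<noteq> SZero" and hqp_nz: "A q p \<noteq> SZero" using e by (auto simp: st_mult_zero_iff)
    have hqp_eq: "sval (A q p) = a2 - sval (A p q)"
    proof -
      have "sval (A p q * A q p) = a2" using e by simp
      then have "sval (A p q) + sval (A q p) = a2" using hpq_nz hqp_nz by (simp add: st_sval_mult)
      then show ?thesis by (simp add: eq_diff_eq add.commute)
    qed
    have h_ppqq: "A q q \<noteq> SZero \<Longrightarrow> sval (A p p) + sval (A q q) < a2"
      using o pqr al hpp_nz by (auto simp: st_mult_zero_iff st_sval_mult)
    interpret c: core1 "A p p" "A p q" "A p r" "A q p" "A q q" "A q r" "A r p" "A r q" "A r r" a1 a2 a3
      by unfold_locales (fact hpp_nz hpp hqq hrr h_pprr h_prrp h_qqrr h_qrrq h3_ppqqrr h3_ppqrrq h3_pqqprr h3_prrpqq h3_pqqrrp h3_prrqqp conc1 conc2 hpq_nz hqp_nz hqp_eq h_ppqq)+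
    show ?thesis
    proof (rule indep3[where dA="a1 + a1" and dB=a2 and dC=a2, OF pqr(1,2,3)])
      show "v 1 p = Tan (a1 + a1)" unfolding V1p by (rule c.diag1)
      show "v 2 q = Tan a2" unfolding V2q by (rule c.diag2)
      show "v 3 r = Tan a2" unfolding V3r by (rule c.diag3)
      show "v 2 p \<noteq> SZero \<Longrightarrow> v 1 q \<noteq> SZero \<Longrightarrow> sval (v 2 p) + sval (v 1 q) < a1 + a1 + a2"
        unfolding V2p V1q by (rule c.cyc0)
      show "v 3 p \<noteq> SZero \<Longrightarrow> v 1 r \<noteq> SZero \<Longrightarrow> sval (v 3 p) + sval (v 1 r) < a1 + a1 + a2"
        unfolding V3p V1r by (rule c.cyc1)
      show "v 3 q \<noteq> SZero \<Longrightarrow> v 2 r \<noteq> SZero \<Longrightarrow> sval (v 3 q) + sval (v 2 r) < a2 + a2"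
        unfolding V3q V2r by (rule c.cyc2)
      show "v 2 p \<noteq> SZero \<Longrightarrow> v 3 q \<noteq> SZero \<Longrightarrow> v 1 r \<noteq> SZero \<Longrightarrow> sval (v 2 p) + sval (v 3 q) + sval (v 1 r) < a1 + a1 + a2 + a2"
        unfolding V2p V3q V1r by (rule c.cyc3)
      show "v 3 p \<noteq> SZero \<Longrightarrow> v 2 r \<noteq> SZero \<Longrightarrow> v 1 q \<noteq> SZero \<Longrightarrow> sval (v 3 p) + sval (v 2 r) + sval (v 1 q) < a1 + a1 + a2 + a2"
        unfolding V3p V2r V1q by (rule c.cyc4)
    qed
  qed
qed




lemma main2:
  fixes A :: "'a::linordered_ab_group_add smat"
    and ii :: "nat \<Rightarrow> nat"
    and lam :: "nat \<Rightarrow> 'a st"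
    and t :: "nat \<Rightarrow> nat"
    and v :: "nat \<Rightarrow> nat \<Rightarrow> 'a st"
  assumes coeffs_tangible: "\<forall>k\<le>2. tangible (char_coeff A 2 k)"
    and ii_mono: "strict_mono_on {0..2} ii"
    and ii_ess: "{k. essential A 2 k} = ii ` {0..2}"
    and lam_corner: "\<forall>k\<in>{1..2}. tangible (lam k) \<and>
        char_coeff A 2 (ii (k - 1)) * lam k ^ (2 - ii (k - 1)) =
        char_coeff A 2 (ii k) * lam k ^ (2 - ii k)"
    and t_choice: "\<forall>k\<in>{1..2}. t k \<in> Ind A 2 (ii k) - Ind A 2 (ii (k - 1))"
    and v_def: "\<forall>k\<in>{1..2}. \<forall>j<2. v k j = hat (sadj (add_diag A (lam k)) 2 j (t k))"
  shows "st_independent 2 v 2"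
proof -
  have sub: "ii ` {0..2} \<subseteq> {0..2}" using ii_ess by (auto simp: essential_def)
  have ii: "ii 0 = 0" "ii 1 = 1" "ii 2 = 2"
    using smono_id[OF ii_mono sub] by auto
  have ii': "ii (Suc 0) = Suc 0" using ii(2) by simp
  have "1 \<in> ii ` {0..2}" by (rule image_eqI[of _ _ 1], rule ii(2)[symmetric], simp)
  then have ess: "essential A 2 1" using ii_ess by auto
  have "tangible (char_coeff A 2 1)" "tangible (char_coeff A 2 2)"
    using coeffs_tangible by auto
  then obtain a1 a2 where al: "char_coeff A 2 1 = Tan a1" "char_coeff A 2 2 = Tan a2"
    by (auto simp: tangible_def)
  have al0: "char_coeff A 2 0 = Tan 0" by (rule char_coeff0)
  have conc1: "a2 < a1 + a1"
  proof -
    obtain x where x: "tangible x" "\<forall>j\<le>2. j \<noteq> 1 \<longrightarrow> nu_less (char_coeff A 2 j * x ^ (2 - j)) (char_coeff A 2 1 * x ^ (2 - 1))"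
      using ess(1) unfolding essential_def by blast
    obtain y where y: "x = Tan y" using x(1) by (auto simp: tangible_def)
    have h0: "nu_less (char_coeff A 2 0 * x ^ 2) (char_coeff A 2 1 * x ^ 1)" using x(2)[rule_format, of 0] by simp
    have h2: "nu_less (char_coeff A 2 2 * x ^ 0) (char_coeff A 2 1 * x ^ 1)" using x(2)[rule_format, of 2] by simp
    have "y < a1" using h0 unfolding al al0 y tpow by (simp add: nu_less_tan algebra_simps)
    moreover have "a2 < a1 + y" using h2 unfolding al al0 y tpow by (simp add: nu_less_tan algebra_simps)
    ultimately show ?thesis by (meson add_strict_left_mono less_trans)
  qed
  have lam: "lam 1 = Tan a1" "lam 2 = Tan (a2 - a1)"
  proof -
    have "tangible (lam 1)" "tangible (lam 2)" using lam_corner by auto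
    then obtain l1 l2 where l: "lam 1 = Tan l1" "lam 2 = Tan l2" by (auto simp: tangible_def)
    have e1: "char_coeff A 2 0 * lam 1 ^ 2 = char_coeff A 2 1 * lam 1 ^ 1" using lam_corner[rule_format, of 1] ii ii' by simp
    have e2: "char_coeff A 2 1 * lam 2 ^ 1 = char_coeff A 2 2 * lam 2 ^ 0" using lam_corner[rule_format, of 2] ii ii' by simp
    have "l1 = a1" using e1 unfolding l al al0 tpow by (simp add: algebra_simps)
    moreover have "l2 = a2 - a1" using e2 unfolding l al al0 tpow by (simp add: algebra_simps)
    ultimately show "lam 1 = Tan a1" "lam 2 = Tan (a2 - a1)" using l by auto
  qed
  have tc: "t 1 \<in> Ind A 2 1" "t 2 \<in> Ind A 2 2" "t 2 \<notin> Ind A 2 1"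
    using t_choice[rule_format, of 1] t_choice[rule_format, of 2] ii ii' by simp_all
  have tg: "tangible (char_coeff A 2 1)" "tangible (char_coeff A 2 2)"
    using al by (simp_all add: tangible_def)
  obtain S1 \<sigma>1 where d1: "S1 \<subseteq> {..<2}" "card S1 = 1" "\<sigma>1 permutes S1"
    "(\<Prod>i\<in>S1. A i (\<sigma>1 i)) = char_coeff A 2 1" "Ind A 2 1 = S1"
    and o1: "\<And>S \<sigma>. S \<subseteq> {..<2} \<Longrightarrow> card S = 1 \<Longrightarrow> \<sigma> permutes S \<Longrightarrow> (S, \<sigma>) \<noteq> (S1, \<sigma>1) \<Longrightarrow>
       (\<Prod>i\<in>S. A i (\<sigma> i)) = SZero \<or> sval (\<Prod>i\<in>S. A i (\<sigma> i)) < sval (char_coeff A 2 1)"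
    by (rule dom_char[OF tg(1)]) blast
  obtain S2 \<sigma>2 where d2: "S2 \<subseteq> {..<2}" "card S2 = 2" "\<sigma>2 permutes S2"
    "(\<Prod>i\<in>S2. A i (\<sigma>2 i)) = char_coeff A 2 2" "Ind A 2 2 = S2"
    by (rule dom_char[OF tg(2)]) blast
  define p where "p = t 1"
  define q where "q = t 2"
  have tpq: "t 1 = p" "t 2 = q" by (simp_all add: p_def q_def)
  obtain x1 where "S1 = {x1}" using d1(2) by (rule card_1_singletonE)
  then have S1: "S1 = {p}" using tc(1) d1(5) tpq by simp
  have p2: "p < 2" using d1(1) S1 by auto
  have \<sigma>1: "\<sigma>1 = id" using d1(3) S1 by simp
  have App: "A p p = Tan a1" using d1(4) S1 \<sigma>1 al by simp
  have S2: "S2 = {..<2}" by (rule card_subset_eq) (use d2(1,2) in auto)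
  have q2: "q < 2" and qp: "q \<noteq> p" using tc(2,3) d1(5) d2(5) S1 S2 tpq by auto
  have pq: "p < 2" "q < 2" "p \<noteq> q" "q \<noteq> p" using p2 q2 qp by auto
  have set2: "{p, q} \<subseteq> {..<2}" "card {p, q} = 2" using pq by auto
  have hqq: "A q q = SZero \<or> sval (A q q) < a1"
    using o1[of "{q}" id] pq S1 \<sigma>1 al by auto
  have T: "(\<Prod>i\<in>{p, q}. A i (Transposition.transpose p q i)) = SZero \<or> (char_coeff A 2 2 \<noteq> SZero \<and> sval (\<Prod>i\<in>{p, q}. A i (Transposition.transpose p q i)) \<le> sval (char_coeff A 2 2))"
    by (rule term_le[OF set2 permutes_swap_id]) simp_all
  have hpq: "A p q \<noteq> SZero \<Longrightarrow> A q p \<noteq> SZero \<Longrightarrow> sval (A p q) + sval (A q p) < a1 + a1"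
  proof -
    assume "A p q \<noteq> SZero" "A q p \<noteq> SZero"
    then have "sval (A p q) + sval (A q p) \<le> a2" using T pq al by (auto simp: st_sval_mult st_mult_zero_iff)
    then show ?thesis using conc1 by (rule le_less_trans)
  qed
  have l21: "a2 - a1 < a1" using conc1 by (simp add: diff_less_eq)
  have V1p: "v 1 p = hat (A q q + Tan a1)"
    using v_def[rule_format, of 1 p] sadj2[of q p q p "add_diag A (lam 1)"] pq lam tpq by (simp add: add_diag_def)
  have V2q: "v 2 q = hat (A p p + Tan (a2 - a1))"
    using v_def[rule_format, of 2 q] sadj2[of p q p q "add_diag A (lam 2)"] pq lam tpq by (simp add: add_diag_def)
  have V2p: "v 2 p = hat (A p q)"
    using v_def[rule_format, of 2 p] sadj2[of p q q p "add_diag A (lam 2)"] pq lam tpq by (simp add: add_diag_def)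
  have V1q: "v 1 q = hat (A q p)"
    using v_def[rule_format, of 1 q] sadj2[of q p p q "add_diag A (lam 1)"] pq lam tpq by (simp add: add_diag_def)
  show ?thesis
  proof (rule indep2[where dA=a1 and dB=a1, OF pq(1,2)])
    show "v 1 p = Tan a1" unfolding V1p
      by (subst st_sum_dom2) (use hqq in auto)
    show "v 2 q = Tan a1" unfolding V2q App
      by (subst st_sum_dom) (use l21 in auto)
    show "v 2 p \<noteq> SZero \<Longrightarrow> v 1 q \<noteq> SZero \<Longrightarrow> sval (v 2 p) + sval (v 1 q) < a1 + a1"
      unfolding V2p V1q using hpq by (simp add: st_hat_zero_iff st_sval_hat)
  qed
qed


theorem proposition3p2:
  fixes A :: "'a::linordered_ab_group_add smat"
    and n :: nat
    and ii :: "nat \<Rightarrow> nat"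
    and lam :: "nat \<Rightarrow> 'a st"
    and t :: "nat \<Rightarrow> nat"
    and v :: "nat \<Rightarrow> nat \<Rightarrow> 'a st"
  assumes n23: "n \<in> {2, 3}"
    and nonsing: "tangible (sdet A n)"
    and coeffs_tangible: "\<forall>k\<le>n. tangible (char_coeff A n k)"
    and distinct_eig: "card (eigenvalues A n) = n"
    and ii_mono: "strict_mono_on {0..n} ii"
    and ii_ess: "{k. essential A n k} = ii ` {0..n}"
    and lam_corner: "\<forall>k\<in>{1..n}. tangible (lam k) \<and>
        char_coeff A n (ii (k - 1)) * lam k ^ (n - ii (k - 1)) =
        char_coeff A n (ii k) * lam k ^ (n - ii k)"
    and t_choice: "\<forall>k\<in>{1..n}. t k \<in> Ind A n (ii k) - Ind A n (ii (k - 1))"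
    and v_def: "\<forall>k\<in>{1..n}. \<forall>j<n. v k j = hat (sadj (add_diag A (lam k)) n j (t k))"
  shows "st_independent n v n"
proof -
  from n23 have "n = 2 \<or> n = 3" by simp
  then show ?thesis
  proof
    assume n: "n = 2"
    show ?thesis unfolding n
      by (rule main2[OF coeffs_tangible[unfolded n] ii_mono[unfolded n] ii_ess[unfolded n] lam_corner[unfolded n] t_choice[unfolded n] v_def[unfolded n]])
  next
    assume n: "n = 3"
    show ?thesis unfolding n
      by (rule main3[OF coeffs_tangible[unfolded n] ii_mono[unfolded n] ii_ess[unfolded n] lam_corner[unfolded n] t_choice[unfolded n] v_def[unfolded n]])
  qed
qed

end
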